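(* Let $n \ge 3$, let $u_1,u_2 \in M_n(\mathbb C)$ be unitaries such that $\{1_n, u_1^*u_2, u_2^*u_1\}$ is linearly independent, let $0<t<1$, and define $\Phi(x) = t\,u_1xu_1^* + (1-t)\,u_2xu_2^*$ for $x\in M_n(\mathbb C)$. Let $(\mathcal A,\tau)$ be a von Neumann algebra with a normal faithful tracial state. Then $\Phi$ is factorizable with ancilla $(\mathcal A,\tau)$ if and only if $\mathcal A$ contains a projection $p$ with $\tau(p) = t$. *)

theory Defs
  imports "HOL-Analysis.Analysis"
begin

definition cadj :: "complex^'n^'n \<Rightarrow> complex^'n^'n" where
  "cadj A = (\<chi> i j. cnj (A $ j $ i))"

definition cunitary :: "complex^'n^'n \<Rightarrow> bool" where
  "cunitary U \<longleftrightarrow> U ** cadj U = mat 1 \<and> cadj U ** U = mat 1"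

definition lin_indep3 :: "complex^'n^'n \<Rightarrow> complex^'n^'n \<Rightarrow> complex^'n^'n \<Rightarrow> bool" where
  "lin_indep3 A B C \<longleftrightarrow> (\<forall>a b c :: complex.
     (\<chi> i j. a * A $ i $ j + b * B $ i $ j + c * C $ i $ j) = 0 \<longrightarrow> a = 0 \<and> b = 0 \<and> c = 0)"

text \<open>A general complex Hilbert space, modelled (up to unitary isomorphism) as
  l^2('i) for an arbitrary index type 'i.  Bounded operators are functions on
  'i \<Rightarrow> complex that are linear and bounded on l^2 and vanish outside l^2.\<close>

type_synonym 'i op = "('i \<Rightarrow> complex) \<Rightarrow> ('i \<Rightarrow> complex)"

definition l2 :: "('i \<Rightarrow> complex) set" where
  "l2 = {f. (\<lambda>i. (cmod (f i))^2) summable_on UNIV}"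

definition ip :: "('i \<Rightarrow> complex) \<Rightarrow> ('i \<Rightarrow> complex) \<Rightarrow> complex" where
  "ip f g = infsum (\<lambda>i. cnj (f i) * g i) UNIV"

definition l2norm :: "('i \<Rightarrow> complex) \<Rightarrow> real" where
  "l2norm f = sqrt (infsum (\<lambda>i. (cmod (f i))^2) UNIV)"

definition bounded_op :: "'i op \<Rightarrow> bool" where
  "bounded_op T \<longleftrightarrow>
     (\<forall>f\<in>l2. T f \<in> l2) \<and>
     (\<forall>f\<in>l2. \<forall>g\<in>l2. \<forall>c::complex. T (\<lambda>i. f i + c * g i) = (\<lambda>i. T f i + c * T g i)) \<and>
     (\<exists>K. \<forall>f\<in>l2. l2norm (T f) \<le> K * l2norm f) \<and>
     (\<forall>f. f \<notin> l2 \<longrightarrow> T f = (\<lambda>i. 0))"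

definition op_id :: "'i op" where
  "op_id f = (if f \<in> l2 then f else (\<lambda>i. 0))"

definition op_zero :: "'i op" where
  "op_zero = (\<lambda>f i. 0)"

definition op_add :: "'i op \<Rightarrow> 'i op \<Rightarrow> 'i op" where
  "op_add T S = (\<lambda>f i. T f i + S f i)"

definition op_smult :: "complex \<Rightarrow> 'i op \<Rightarrow> 'i op" where
  "op_smult c T = (\<lambda>f i. c * T f i)"

definition op_sum :: "('a \<Rightarrow> 'i op) \<Rightarrow> 'a set \<Rightarrow> 'i op" where
  "op_sum F A = (\<lambda>f i. \<Sum>a\<in>A. F a f i)"

definition op_adj :: "'i op \<Rightarrow> 'i op" where
  "op_adj T = (THE S. bounded_op S \<and> (\<forall>f\<in>l2. \<forall>g\<in>l2. ip (S f) g = ip f (T g)))"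

definition self_adjoint_op :: "'i op \<Rightarrow> bool" where
  "self_adjoint_op T \<longleftrightarrow> bounded_op T \<and> op_adj T = T"

definition positive_op :: "'i op \<Rightarrow> bool" where
  "positive_op T \<longleftrightarrow> bounded_op T \<and>
     (\<forall>f\<in>l2. Im (ip f (T f)) = 0 \<and> Re (ip f (T f)) \<ge> 0)"

definition op_le :: "'i op \<Rightarrow> 'i op \<Rightarrow> bool" where
  "op_le S T \<longleftrightarrow> positive_op (op_add T (op_smult (-1) S))"

definition commutant :: "'i op set \<Rightarrow> 'i op set" where
  "commutant M = {S. bounded_op S \<and> (\<forall>T\<in>M. S \<circ> T = T \<circ> S)}"

definition von_neumann_algebra :: "'i op set \<Rightarrow> bool" where
  "von_neumann_algebra M \<longleftrightarrow>
     M \<subseteq> Collect bounded_op \<and> (\<forall>T\<in>M. op_adj T \<in> M) \<and> commutant (commutant M) = M"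

definition tracial_state :: "'i op set \<Rightarrow> ('i op \<Rightarrow> complex) \<Rightarrow> bool" where
  "tracial_state M \<tau> \<longleftrightarrow>
     (\<forall>T\<in>M. \<forall>S\<in>M. \<forall>c. \<tau> (op_add T (op_smult c S)) = \<tau> T + c * \<tau> S) \<and>
     (\<forall>T\<in>M. positive_op T \<longrightarrow> Im (\<tau> T) = 0 \<and> Re (\<tau> T) \<ge> 0) \<and>
     \<tau> op_id = 1 \<and>
     (\<forall>T\<in>M. \<forall>S\<in>M. \<tau> (T \<circ> S) = \<tau> (S \<circ> T))"

definition faithful_state :: "'i op set \<Rightarrow> ('i op \<Rightarrow> complex) \<Rightarrow> bool" where
  "faithful_state M \<tau> \<longleftrightarrow> (\<forall>T\<in>M. positive_op T \<and> \<tau> T = 0 \<longrightarrow> T = op_zero)"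

definition normal_state :: "'i op set \<Rightarrow> ('i op \<Rightarrow> complex) \<Rightarrow> bool" where
  "normal_state M \<tau> \<longleftrightarrow>
     (\<forall>D T. D \<subseteq> M \<and> D \<noteq> {} \<and> (\<forall>S\<in>D. positive_op S) \<and>
        (\<forall>a\<in>D. \<forall>b\<in>D. \<exists>c\<in>D. op_le a c \<and> op_le b c) \<and>
        T \<in> M \<and> self_adjoint_op T \<and> (\<forall>S\<in>D. op_le S T) \<and>
        (\<forall>T'. self_adjoint_op T' \<and> (\<forall>S\<in>D. op_le S T') \<longrightarrow> op_le T T')
      \<longrightarrow> Re (\<tau> T) = (SUP S\<in>D. Re (\<tau> S)))"

definition normal_faithful_tracial_state :: "'i op set \<Rightarrow> ('i op \<Rightarrow> complex) \<Rightarrow> bool" where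
  "normal_faithful_tracial_state M \<tau> \<longleftrightarrow>
     tracial_state M \<tau> \<and> faithful_state M \<tau> \<and> normal_state M \<tau>"

text \<open>Factorizability with ancilla (M,\<tau>): there is a unitary U in M_n(C) \<otimes> M
  (an n x n matrix with entries in M) with \<Phi>(x) = (id \<otimes> \<tau>)(U^*(x \<otimes> 1)U).\<close>
definition factorizable_with_ancilla ::
  "(complex^'n^'n \<Rightarrow> complex^'n^'n) \<Rightarrow> 'i op set \<Rightarrow> ('i op \<Rightarrow> complex) \<Rightarrow> bool" where
  "factorizable_with_ancilla \<Phi> M \<tau> \<longleftrightarrow>
     (\<exists>U :: 'n \<Rightarrow> 'n \<Rightarrow> 'i op.
        (\<forall>j k. U j k \<in> M) \<and>
        (\<forall>j l. op_sum (\<lambda>k. op_adj (U k j) \<circ> U k l) UNIV = (if j = l then op_id else op_zero)) \<and>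
        (\<forall>j l. op_sum (\<lambda>k. U j k \<circ> op_adj (U l k)) UNIV = (if j = l then op_id else op_zero)) \<and>
        (\<forall>x j l. \<Phi> x $ j $ l =
           \<tau> (op_sum (\<lambda>(k, m). op_smult (x $ k $ m) (op_adj (U k j) \<circ> U m l)) UNIV)))"

end

theory Submission
  imports Defs
begin

definition ebas :: "'i \<Rightarrow> 'i \<Rightarrow> complex" where
  "ebas a = (\<lambda>j. if j = a then 1 else 0)"

lemma l2_iff: "f \<in> l2 \<longleftrightarrow> (\<lambda>i. (cmod (f i))^2) summable_on UNIV"
  by (simp add: l2_def)

lemma l2_zero[simp]: "(\<lambda>i. 0) \<in> l2"
  by (simp add: l2_def)

lemma sq_ineq: "(cmod (a + c * b))^2 \<le> 2 * (cmod a)^2 + 2 * ((cmod c)^2 * (cmod b)^2)"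
proof -
  have "cmod (a + c * b) \<le> cmod a + cmod c * cmod b"
    by (metis norm_mult norm_triangle_ineq)
  hence "(cmod (a + c * b))^2 \<le> (cmod a + cmod c * cmod b)^2"
    by (simp add: power_mono)
  also have "\<dots> \<le> 2 * (cmod a)^2 + 2 * ((cmod c)^2 * (cmod b)^2)"
  proof -
    have "0 \<le> (cmod a - cmod c * cmod b)^2" by simp
    thus ?thesis by (simp add: power2_eq_square algebra_simps)
  qed
  finally show ?thesis .
qed

lemma l2_comb: "f \<in> l2 \<Longrightarrow> g \<in> l2 \<Longrightarrow> (\<lambda>i. f i + c * g i) \<in> l2"
  unfolding l2_iff
proof (rule summable_on_comparison_test[where f="\<lambda>i. 2 * (cmod (f i))^2 + 2 * ((cmod c)^2 * (cmod (g i))^2)"])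
  assume a: "(\<lambda>i. (cmod (f i))\<^sup>2) summable_on UNIV" "(\<lambda>i. (cmod (g i))\<^sup>2) summable_on UNIV"
  show "(\<lambda>i. 2 * (cmod (f i))\<^sup>2 + 2 * ((cmod c)\<^sup>2 * (cmod (g i))\<^sup>2)) summable_on UNIV"
    by (intro summable_on_add summable_on_cmult_right a)
qed (auto simp: sq_ineq)

lemma l2_scale: "f \<in> l2 \<Longrightarrow> (\<lambda>i. c * f i) \<in> l2"
  using l2_comb[of "\<lambda>i. 0" f c] by simp

lemma l2_add: "f \<in> l2 \<Longrightarrow> g \<in> l2 \<Longrightarrow> (\<lambda>i. f i + g i) \<in> l2"
  using l2_comb[of f g 1] by simp

lemma l2_diff: "f \<in> l2 \<Longrightarrow> g \<in> l2 \<Longrightarrow> (\<lambda>i. f i - g i) \<in> l2"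
  using l2_comb[of f g "-1"] by simp

lemma l2_comb2: "f \<in> l2 \<Longrightarrow> g \<in> l2 \<Longrightarrow> (\<lambda>i. a * f i + b * g i) \<in> l2"
  using l2_comb[OF l2_scale[of f a] l2_scale[of g b], of 1] by simp

lemma l2_finsupp: "finite F \<Longrightarrow> (\<lambda>j. if j \<in> F then g j else 0) \<in> l2"
  unfolding l2_iff
  by (rule finite_nonzero_values_imp_summable_on) (auto elim: rev_finite_subset)

lemma l2_ebas[simp]: "ebas a \<in> l2"
  using l2_finsupp[of "{a}" "\<lambda>_. 1"] by (simp add: ebas_def)

lemma aux_xy:
  fixes x y :: real assumes "0 \<le> x" "0 \<le> y" shows "x * y \<le> x^2 + y^2"
proof -
  have "0 \<le> (x - y)^2" by simp
  hence "2 * (x * y) \<le> x^2 + y^2" by (simp add: power2_eq_square algebra_simps)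
  moreover have "0 \<le> x * y" using assms by simp
  ultimately show ?thesis by linarith
qed

lemma ip_summable:
  assumes "f \<in> l2" "g \<in> l2"
  shows "(\<lambda>i. cnj (f i) * g i) summable_on UNIV"
proof (rule abs_summable_summable)
  have "(\<lambda>i. (cmod (f i))^2 + (cmod (g i))^2) summable_on UNIV"
    using assms by (intro summable_on_add) (auto simp: l2_iff)
  thus "(\<lambda>i. cmod (cnj (f i) * g i)) summable_on UNIV"
  proof (rule Infinite_Sum.abs_summable_on_comparison_test')
    fix i
    have "cmod (f i) * cmod (g i) \<le> (cmod (f i))^2 + (cmod (g i))^2"
      by (rule aux_xy) simp_all
    thus "norm (cnj (f i) * g i) \<le> (cmod (f i))^2 + (cmod (g i))^2"
      by (simp add: norm_mult)
  qed
qed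

lemma ip_has_sum: "f \<in> l2 \<Longrightarrow> g \<in> l2 \<Longrightarrow> ((\<lambda>i. cnj (f i) * g i) has_sum ip f g) UNIV"
  unfolding ip_def using ip_summable by (simp add: summable_iff_has_sum_infsum)

lemma ip_lin_right:
  assumes "f \<in> l2" "g \<in> l2" "h \<in> l2"
  shows "ip f (\<lambda>i. g i + c * h i) = ip f g + c * ip f h"
proof -
  have "ip f (\<lambda>i. g i + c * h i) = infsum (\<lambda>i. cnj (f i) * g i + c * (cnj (f i) * h i)) UNIV"
    unfolding ip_def by (simp add: algebra_simps)
  also have "\<dots> = ip f g + c * ip f h"
    unfolding ip_def
    by (subst infsum_add) (auto intro!: summable_on_cmult_right ip_summable assms simp: infsum_cmult_right ip_summable assms)
  finally show ?thesis .
qed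

lemma ip_cnj: "cnj (ip f g) = ip g f"
  unfolding ip_def infsum_cnj[symmetric] by (simp add: mult.commute)

lemma ip_lin_left:
  assumes "f \<in> l2" "g \<in> l2" "h \<in> l2"
  shows "ip (\<lambda>i. g i + c * h i) f = ip g f + cnj c * ip h f"
proof -
  have "ip (\<lambda>i. g i + c * h i) f = cnj (ip f (\<lambda>i. g i + c * h i))" by (simp add: ip_cnj)
  also have "\<dots> = ip g f + cnj c * ip h f" using ip_lin_right[OF assms, of c] by (simp add: ip_cnj)
  finally show ?thesis .
qed

lemma infsum_of_real':
  assumes "f summable_on A"
  shows "infsum (\<lambda>x. complex_of_real (f x)) A = complex_of_real (infsum f A)"
  by (rule infsumI) (use assms has_sum_of_real_iff summable_iff_has_sum_infsum in blast)

lemma l2norm_nonneg: "l2norm f \<ge> 0"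
  unfolding l2norm_def by (simp add: infsum_nonneg)

lemma l2norm_sq: "(l2norm f)^2 = infsum (\<lambda>i. (cmod (f i))^2) UNIV"
  unfolding l2norm_def by (simp add: infsum_nonneg)

lemma ip_self: assumes "f \<in> l2" shows "ip f f = complex_of_real ((l2norm f)^2)"
proof -
  have "ip f f = infsum (\<lambda>i. complex_of_real ((cmod (f i))^2)) UNIV"
    unfolding ip_def by (metis complex_norm_square mult.commute of_real_power)
  also have "\<dots> = complex_of_real (infsum (\<lambda>i. (cmod (f i))^2) UNIV)"
    using assms by (metis infsum_of_real' l2_iff)
  finally show ?thesis by (simp add: l2norm_sq)
qed

lemma l2norm_zero:
  assumes "f \<in> l2" "l2norm f = 0" shows "f = (\<lambda>i. 0)"
proof
  fix i
  have "infsum (\<lambda>i. (cmod (f i))^2) UNIV \<le> 0" using assms l2norm_sq[of f] by simp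
  hence "(cmod (f i))^2 = 0"
    by (rule nonneg_infsum_le_0D) (use assms in \<open>auto simp: l2_iff\<close>)
  thus "f i = 0" by simp
qed

lemma ip_self_zero: "f \<in> l2 \<Longrightarrow> ip f f = 0 \<Longrightarrow> f = (\<lambda>i. 0)"
  using ip_self l2norm_zero by fastforce

lemma l2_prod_summable:
  assumes "f \<in> l2" "g \<in> l2"
  shows "(\<lambda>i. cmod (f i) * cmod (g i)) summable_on UNIV"
proof (rule summable_on_comparison_test[where f="\<lambda>i. (cmod (f i))^2 + (cmod (g i))^2"])
  show "(\<lambda>i. (cmod (f i))^2 + (cmod (g i))^2) summable_on UNIV"
    using assms by (intro summable_on_add) (auto simp: l2_iff)
qed (auto intro: aux_xy)

lemma aux_s:
  fixes x y s :: real assumes "0 < s"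
  shows "x * y \<le> (s / 2) * x^2 + (1 / (2 * s)) * y^2"
proof -
  have "0 \<le> (s * x - y)^2" by simp
  hence "2 * s * (x * y) \<le> s^2 * x^2 + y^2" by (simp add: power2_eq_square algebra_simps)
  thus ?thesis using assms by (simp add: field_simps power2_eq_square)
qed

lemma CS:
  assumes f: "f \<in> l2" and g: "g \<in> l2"
  shows "cmod (ip f g) \<le> l2norm f * l2norm g"
proof -
  define A where "A = infsum (\<lambda>i. (cmod (f i))^2) UNIV"
  define B where "B = infsum (\<lambda>i. (cmod (g i))^2) UNIV"
  have A0: "A \<ge> 0" "B \<ge> 0" unfolding A_def B_def by (simp_all add: infsum_nonneg)
  have nA: "l2norm f = sqrt A" and nB: "l2norm g = sqrt B" unfolding A_def B_def l2norm_def by simp_all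
  have h1: "cmod (ip f g) \<le> infsum (\<lambda>i. cmod (f i) * cmod (g i)) UNIV"
    by (rule norm_infsum_le[OF ip_has_sum[OF f g]])
       (auto simp: norm_mult intro: l2_prod_summable[OF f g, unfolded summable_iff_has_sum_infsum])
  show ?thesis
  proof (cases "A = 0 \<or> B = 0")
    case True
    then have "f = (\<lambda>i. 0) \<or> g = (\<lambda>i. 0)" using l2norm_zero[OF f] l2norm_zero[OF g] nA nB by auto
    then have "ip f g = 0" unfolding ip_def by auto
    then show ?thesis using l2norm_nonneg[of f] l2norm_nonneg[of g] by simp
  next
    case False
    then have Ap: "A > 0" "B > 0" using A0 by auto
    define s where "s = sqrt B / sqrt A"
    have sp: "s > 0" using Ap unfolding s_def by simp
    have "infsum (\<lambda>i. cmod (f i) * cmod (g i)) UNIV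
        \<le> infsum (\<lambda>i. (s / 2) * (cmod (f i))^2 + (1 / (2 * s)) * (cmod (g i))^2) UNIV"
    proof (rule infsum_mono)
      show "(\<lambda>i. cmod (f i) * cmod (g i)) summable_on UNIV" by (rule l2_prod_summable[OF f g])
      show "(\<lambda>i. (s / 2) * (cmod (f i))^2 + (1 / (2 * s)) * (cmod (g i))^2) summable_on UNIV"
        using f g unfolding l2_iff
        by (intro summable_on_add summable_on_cmult_right) auto
    qed (rule aux_s[OF sp])
    also have "\<dots> = (s / 2) * A + (1 / (2 * s)) * B"
    proof -
      have sf: "(\<lambda>i. (cmod (f i))^2) summable_on UNIV" and sg: "(\<lambda>i. (cmod (g i))^2) summable_on UNIV"
        using f g by (auto simp: l2_iff)
      show ?thesis
        unfolding A_def B_def infsum_add[OF summable_on_cmult_right[OF sf] summable_on_cmult_right[OF sg]]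
        by (simp only: infsum_cmult_right')
    qed
    also have "\<dots> = sqrt A * sqrt B"
      using Ap unfolding s_def by (simp add: field_simps)
    finally show ?thesis using h1 nA nB by simp
  qed
qed

lemma ip_add_left: "f \<in> l2 \<Longrightarrow> g \<in> l2 \<Longrightarrow> k \<in> l2 \<Longrightarrow> ip (\<lambda>i. f i + g i) k = ip f k + ip g k"
  using ip_lin_left[of k f g 1] by simp

lemma ip_add_right: "f \<in> l2 \<Longrightarrow> g \<in> l2 \<Longrightarrow> k \<in> l2 \<Longrightarrow> ip k (\<lambda>i. f i + g i) = ip k f + ip k g"
  using ip_lin_right[of k f g 1] by simp

lemma l2norm_triangle:
  assumes f: "f \<in> l2" and g: "g \<in> l2"
  shows "l2norm (\<lambda>i. f i + g i) \<le> l2norm f + l2norm g"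
proof -
  define h where "h = (\<lambda>i. f i + g i)"
  have h: "h \<in> l2" unfolding h_def using l2_add[OF f g] .
  have "complex_of_real ((l2norm h)^2) = ip h h" using ip_self[OF h] by simp
  also have "\<dots> = ip f f + ip f g + ip g f + ip g g"
    unfolding h_def using f g l2_add[OF f g] by (simp add: ip_add_left ip_add_right)
  finally have e: "(l2norm h)^2 = (l2norm f)^2 + (l2norm g)^2 + Re (ip f g) + Re (ip g f)"
    using ip_self[OF f] ip_self[OF g]
    by (metis (no_types, lifting) Re_complex_of_real plus_complex.sel(1) add.commute add.left_commute)
  have "Re (ip f g) \<le> l2norm f * l2norm g" using CS[OF f g] complex_Re_le_cmod order_trans by blast
  moreover have "Re (ip g f) \<le> l2norm f * l2norm g" using CS[OF g f] complex_Re_le_cmod order_trans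
    by (metis mult.commute)
  ultimately have "(l2norm h)^2 \<le> (l2norm f + l2norm g)^2"
    unfolding e by (simp add: power2_eq_square algebra_simps)
  thus ?thesis unfolding h_def[symmetric]
    by (rule power2_le_imp_le) (simp add: l2norm_nonneg add_nonneg_nonneg)
qed

lemma l2norm_scale: "l2norm (\<lambda>i. c * f i) = cmod c * l2norm f"
  by (simp add: l2norm_def norm_mult power_mult_distrib infsum_cmult_right' real_sqrt_mult)

lemma key_functional:
  fixes \<phi> :: "('i \<Rightarrow> complex) \<Rightarrow> complex"
  assumes lin: "\<And>g h c. g \<in> l2 \<Longrightarrow> h \<in> l2 \<Longrightarrow> \<phi> (\<lambda>i. g i + c * h i) = \<phi> g + c * \<phi> h"
    and bnd: "\<And>g. g \<in> l2 \<Longrightarrow> cmod (\<phi> g) \<le> C * l2norm g"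
    and g: "g \<in> l2"
  shows "((\<lambda>i. g i * \<phi> (ebas i)) has_sum \<phi> g) UNIV"
proof -
  define gF where "gF F = (\<lambda>j. if j \<in> F then g j else 0)" for F
  have phi0: "\<phi> (\<lambda>i. 0) = 0" using lin[of "\<lambda>i. 0" "\<lambda>i. 0" 1] by simp
  have fin: "\<phi> (gF F) = (\<Sum>i\<in>F. g i * \<phi> (ebas i))" if "finite F" for F
    using that
  proof (induction F rule: finite_induct)
    case empty
    then show ?case using phi0 unfolding gF_def by simp
  next
    case (insert a F)
    have "gF (insert a F) = (\<lambda>j. gF F j + g a * ebas a j)"
      using insert.hyps unfolding gF_def ebas_def by (auto simp: fun_eq_iff)
    then have "\<phi> (gF (insert a F)) = \<phi> (gF F) + g a * \<phi> (ebas a)"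
      using lin l2_finsupp[OF insert.hyps(1)] unfolding gF_def by simp
    then show ?case using insert by simp
  qed
  define S where "S = infsum (\<lambda>i. (cmod (g i))^2) UNIV"
  have hs: "((\<lambda>i. (cmod (g i))^2) has_sum S) UNIV" unfolding S_def using g
    by (simp add: l2_iff)
  have tl: "(sum (\<lambda>i. (cmod (g i))^2) \<longlongrightarrow> S) (finite_subsets_at_top UNIV)"
    using hs unfolding has_sum_def .
  have nrm: "(l2norm (\<lambda>j. g j + (-1) * gF F j))^2 = S - (\<Sum>i\<in>F. (cmod (g i))^2)" if "finite F" for F
  proof -
    have "((\<lambda>i. if i \<in> F then (cmod (g i))^2 else 0) has_sum (\<Sum>i\<in>F. (cmod (g i))^2)) UNIV"
      by (rule has_sum_finite_neutralI[OF that]) auto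
    from has_sum_add[OF hs has_sum_uminusI[OF this]]
    have "((\<lambda>i. (cmod (g i))^2 + - (if i \<in> F then (cmod (g i))^2 else 0)) has_sum S + - (\<Sum>i\<in>F. (cmod (g i))^2)) UNIV" .
    moreover have "(\<lambda>i. (cmod (g i))^2 + - (if i \<in> F then (cmod (g i))^2 else 0)) = (\<lambda>i. (cmod (g i + (-1) * gF F i))^2)"
      unfolding gF_def by (auto simp: fun_eq_iff)
    ultimately show ?thesis unfolding l2norm_sq by (simp add: infsumI)
  qed
  have lim0: "((\<lambda>F. C * sqrt (S - (\<Sum>i\<in>F. (cmod (g i))^2))) \<longlongrightarrow> C * sqrt (S - S)) (finite_subsets_at_top UNIV)"
    by (intro tendsto_intros tl)
  have ev: "\<forall>\<^sub>F F in finite_subsets_at_top UNIV.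
      norm ((\<Sum>i\<in>F. g i * \<phi> (ebas i)) - \<phi> g) \<le> C * sqrt (S - (\<Sum>i\<in>F. (cmod (g i))^2))"
  proof (rule eventually_finite_subsets_at_top_weakI)
    fix F :: "'i set" assume F: "finite F"
    have gl: "gF F \<in> l2" unfolding gF_def using l2_finsupp[OF F] .
    have "(\<Sum>i\<in>F. g i * \<phi> (ebas i)) - \<phi> g = - \<phi> (\<lambda>j. g j + (-1) * gF F j)"
      using fin[OF F] lin[OF g gl, of "-1"] by simp
    hence "norm ((\<Sum>i\<in>F. g i * \<phi> (ebas i)) - \<phi> g) = cmod (\<phi> (\<lambda>j. g j + (-1) * gF F j))" by simp
    also have "\<dots> \<le> C * l2norm (\<lambda>j. g j + (-1) * gF F j)" by (rule bnd[OF l2_comb[OF g gl]])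
    also have "l2norm (\<lambda>j. g j + (-1) * gF F j) = sqrt (S - (\<Sum>i\<in>F. (cmod (g i))^2))"
      using nrm[OF F] l2norm_nonneg by (metis real_sqrt_unique)
    finally show "norm ((\<Sum>i\<in>F. g i * \<phi> (ebas i)) - \<phi> g) \<le> C * sqrt (S - (\<Sum>i\<in>F. (cmod (g i))^2))" .
  qed
  have "((\<lambda>F. (\<Sum>i\<in>F. g i * \<phi> (ebas i)) - \<phi> g) \<longlongrightarrow> 0) (finite_subsets_at_top UNIV)"
    by (rule Lim_null_comparison[OF ev]) (use lim0 in simp)
  then show ?thesis unfolding has_sum_def by (rule LIM_zero_cancel)
qed

lemma bop_l2: "bounded_op T \<Longrightarrow> T f \<in> l2"
  unfolding bounded_op_def by (cases "f \<in> l2") auto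

lemma bop_out: "bounded_op T \<Longrightarrow> f \<notin> l2 \<Longrightarrow> T f = (\<lambda>i. 0)"
  unfolding bounded_op_def by auto

lemma bop_lin: "bounded_op T \<Longrightarrow> f \<in> l2 \<Longrightarrow> g \<in> l2 \<Longrightarrow> T (\<lambda>i. f i + c * g i) = (\<lambda>i. T f i + c * T g i)"
  unfolding bounded_op_def by blast

lemma bop_zero: "bounded_op T \<Longrightarrow> T (\<lambda>i. 0) = (\<lambda>i. 0)"
  using bop_lin[of T "\<lambda>i. 0" "\<lambda>i. 0" 1] by (auto simp: fun_eq_iff)

lemma bop_scale: "bounded_op T \<Longrightarrow> f \<in> l2 \<Longrightarrow> T (\<lambda>i. c * f i) = (\<lambda>i. c * T f i)"
  using bop_lin[of T "\<lambda>i. 0" f c] bop_zero[of T] by simp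

lemma bop_lin2: "bounded_op T \<Longrightarrow> f \<in> l2 \<Longrightarrow> g \<in> l2 \<Longrightarrow> T (\<lambda>i. a * f i + b * g i) = (\<lambda>i. a * T f i + b * T g i)"
  using bop_lin[of T "\<lambda>i. a * f i" g b] bop_scale[of T f a] l2_scale[of f a] by simp

lemma bop_add: "bounded_op T \<Longrightarrow> f \<in> l2 \<Longrightarrow> g \<in> l2 \<Longrightarrow> T (\<lambda>i. f i + g i) = (\<lambda>i. T f i + T g i)"
  using bop_lin[of T f g 1] by simp

lemma bop_bound: "bounded_op T \<Longrightarrow> \<exists>K\<ge>0. \<forall>f\<in>l2. l2norm (T f) \<le> K * l2norm f"
proof -
  assume "bounded_op T"
  then obtain K where K: "\<forall>f\<in>l2. l2norm (T f) \<le> K * l2norm f" unfolding bounded_op_def by blast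
  have "\<forall>f\<in>l2. l2norm (T f) \<le> max K 0 * l2norm f"
    using K l2norm_nonneg by (metis max.cobounded1 mult_right_mono order_trans)
  thus ?thesis by (intro exI[of _ "max K 0"]) auto
qed

lemma adj_exists:
  assumes T: "bounded_op T"
  shows "\<exists>S. bounded_op S \<and> (\<forall>f\<in>l2. \<forall>g\<in>l2. ip (S f) g = ip f (T g))"
proof -
  obtain K where K0: "K \<ge> 0" and K: "\<And>f. f \<in> l2 \<Longrightarrow> l2norm (T f) \<le> K * l2norm f"
    using bop_bound[OF T] by blast
  define S where "S f = (if f \<in> l2 then (\<lambda>i. ip (T (ebas i)) f) else (\<lambda>i. 0))" for f
  have keyf: "((\<lambda>i. g i * ip f (T (ebas i))) has_sum ip f (T g)) UNIV" if f: "f \<in> l2" and g: "g \<in> l2" for f g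
  proof (rule key_functional[where C="l2norm f * K"])
    show "ip f (T (\<lambda>i. g i + c * h i)) = ip f (T g) + c * ip f (T h)" if "g \<in> l2" "h \<in> l2" for g h c
      using that f by (simp add: bop_lin[OF T] ip_lin_right bop_l2[OF T])
    show "cmod (ip f (T g)) \<le> l2norm f * K * l2norm g" if "g \<in> l2" for g
    proof -
      have "cmod (ip f (T g)) \<le> l2norm f * l2norm (T g)" by (rule CS[OF f bop_l2[OF T]])
      also have "\<dots> \<le> l2norm f * (K * l2norm g)" using K[OF that] l2norm_nonneg[of f] by (rule mult_left_mono)
      finally show ?thesis by (simp add: mult.assoc)
    qed
  qed (rule g)
  have Sip: "ip (S f) g = ip f (T g)" if f: "f \<in> l2" and g: "g \<in> l2" for f g
  proof -
    have "ip (S f) g = infsum (\<lambda>i. cnj (ip (T (ebas i)) f) * g i) UNIV"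
      unfolding S_def using f by (simp add: ip_def[of "\<lambda>i. ip (T (ebas i)) f" g])
    also have "\<dots> = infsum (\<lambda>i. g i * ip f (T (ebas i))) UNIV"
      by (simp add: ip_cnj mult.commute)
    also have "\<dots> = ip f (T g)" using keyf[OF f g] by (rule infsumI)
    finally show ?thesis .
  qed
  have Sl2: "S f \<in> l2 \<and> l2norm (S f) \<le> K * l2norm f" if f: "f \<in> l2" for f
  proof -
    define c where "c i = ip (T (ebas i)) f" for i
    define L where "L = K * l2norm f"
    have L0: "L \<ge> 0" unfolding L_def using K0 l2norm_nonneg[of f] by simp
    have finb: "(\<Sum>i\<in>F. (cmod (c i))^2) \<le> L^2" if F: "finite F" for F
    proof -
      define h where "h = (\<lambda>j. if j \<in> F then c j else 0)"
      have hl: "h \<in> l2" unfolding h_def by (rule l2_finsupp[OF F])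
      define s where "s = (\<Sum>i\<in>F. (cmod (c i))^2)"
      have s0: "s \<ge> 0" unfolding s_def by (simp add: sum_nonneg)
      have ce: "ip f (T (ebas i)) = cnj (c i)" for i unfolding c_def by (simp add: ip_cnj)
      have cs: "complex_of_real s = (\<Sum>i\<in>F. c i * cnj (c i))"
        unfolding s_def of_real_sum by (simp add: complex_norm_square del: of_real_power)
      have "((\<lambda>i. h i * ip f (T (ebas i))) has_sum complex_of_real s) UNIV"
        by (rule has_sum_finite_neutralI[OF F]) (auto simp: h_def ce cs)
      hence e1: "ip f (T h) = complex_of_real s" using keyf[OF f hl] has_sum_unique by blast
      have "(l2norm h)^2 = infsum (\<lambda>i. (cmod (h i))^2) UNIV" by (rule l2norm_sq)
      also have "\<dots> = s" unfolding s_def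
        by (rule infsumI, rule has_sum_finite_neutralI[OF F]) (auto simp: h_def)
      finally have nh: "l2norm h = sqrt s" using l2norm_nonneg[of h] real_sqrt_unique by metis
      have "s = cmod (ip f (T h))" using e1 s0 by simp
      also have "\<dots> \<le> l2norm f * l2norm (T h)" by (rule CS[OF f bop_l2[OF T]])
      also have "\<dots> \<le> l2norm f * (K * l2norm h)" using K[OF hl] l2norm_nonneg[of f] by (rule mult_left_mono)
      finally have "s \<le> L * sqrt s" unfolding L_def nh by (simp add: algebra_simps)
      hence "sqrt s * sqrt s \<le> L * sqrt s" using s0 by simp
      hence "sqrt s \<le> L"
      proof (cases "sqrt s = 0")
        case True then show ?thesis using L0 by simp
      next
        case False then have "sqrt s > 0" using s0 by simp
        then show ?thesis using mult_right_le_imp_le \<open>sqrt s * sqrt s \<le> L * sqrt s\<close> by blast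
      qed
      hence "(sqrt s)^2 \<le> L^2" using power_mono[of "sqrt s" L 2] s0 by simp
      thus ?thesis using s0 unfolding s_def by (simp only: real_sqrt_pow2)
    qed
    have summ: "(\<lambda>i. (cmod (c i))^2) summable_on UNIV"
      by (rule nonneg_bdd_above_summable_on) (auto intro!: bdd_aboveI2 finb)
    have "infsum (\<lambda>i. (cmod (c i))^2) UNIV \<le> L^2"
      by (rule infsum_le_finite_sums[OF summ]) (rule finb)
    hence "l2norm (\<lambda>i. c i) \<le> L" unfolding l2norm_def using L0 real_sqrt_le_mono by fastforce
    moreover have "S f = (\<lambda>i. c i)" unfolding S_def c_def using f by simp
    ultimately show ?thesis using summ unfolding L_def l2_def by simp
  qed
  have "bounded_op S"
    unfolding bounded_op_def
  proof (intro conjI ballI allI impI)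
    show "S f \<in> l2" if "f \<in> l2" for f using Sl2 that by blast
    show "S (\<lambda>i. f i + c * g i) = (\<lambda>i. S f i + c * S g i)" if "f \<in> l2" "g \<in> l2" for f g c
      using that l2_comb[OF that] unfolding S_def
      by (simp add: ip_lin_right bop_l2[OF T] l2_ebas)
    show "\<exists>K. \<forall>f\<in>l2. l2norm (S f) \<le> K * l2norm f" using Sl2 by blast
    show "S f = (\<lambda>i. 0)" if "f \<notin> l2" for f using that unfolding S_def by simp
  qed
  thus ?thesis using Sip by blast
qed

lemma adj_unique:
  assumes b1: "bounded_op S1" and b2: "bounded_op S2"
    and a1: "\<forall>f\<in>l2. \<forall>g\<in>l2. ip (S1 f) g = ip f (T g)"
    and a2: "\<forall>f\<in>l2. \<forall>g\<in>l2. ip (S2 f) g = ip f (T g)"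
  shows "S1 = S2"
proof
  fix f
  show "S1 f = S2 f"
  proof (cases "f \<in> l2")
    case True
    define d where "d = (\<lambda>i. S1 f i + (-1) * S2 f i)"
    have l1: "S1 f \<in> l2" using bop_l2[OF b1] .
    have l2': "S2 f \<in> l2" using bop_l2[OF b2] .
    have dl: "d \<in> l2" unfolding d_def by (rule l2_comb[OF l1 l2'])
    have "ip d g = 0" if g: "g \<in> l2" for g
    proof -
      have "ip d g = ip (S1 f) g + cnj (-1) * ip (S2 f) g"
        unfolding d_def by (rule ip_lin_left[OF g l1 l2'])
      also have "ip (S1 f) g = ip f (T g)" using a1 True g by blast
      also have "ip (S2 f) g = ip f (T g)" using a2 True g by blast
      finally show ?thesis by simp
    qed
    hence "ip d d = 0" using dl by blast
    hence "d = (\<lambda>i. 0)" using ip_self_zero[OF dl] by blast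
    hence "S1 f i = S2 f i" for i unfolding d_def by (metis add_eq_0_iff mult_minus1 neg_equal_iff_equal)
    thus ?thesis by blast
  next
    case False
    then show ?thesis using bop_out[OF b1 False] bop_out[OF b2 False] by simp
  qed
qed

lemma op_adj_prop:
  assumes "bounded_op T"
  shows "bounded_op (op_adj T) \<and> (\<forall>f\<in>l2. \<forall>g\<in>l2. ip (op_adj T f) g = ip f (T g))"
proof -
  obtain S0 where S0: "bounded_op S0" "\<forall>f\<in>l2. \<forall>g\<in>l2. ip (S0 f) g = ip f (T g)"
    using adj_exists[OF assms] by blast
  have "\<exists>!S. bounded_op S \<and> (\<forall>f\<in>l2. \<forall>g\<in>l2. ip (S f) g = ip f (T g))"
  proof (rule ex1I[of _ S0])
    show "bounded_op S0 \<and> (\<forall>f\<in>l2. \<forall>g\<in>l2. ip (S0 f) g = ip f (T g))" using S0 by blast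
    fix S assume "bounded_op S \<and> (\<forall>f\<in>l2. \<forall>g\<in>l2. ip (S f) g = ip f (T g))"
    then show "S = S0" using adj_unique[of S S0 T] S0 by blast
  qed
  thus ?thesis unfolding op_adj_def by (rule theI')
qed

lemma op_adj_bounded: "bounded_op T \<Longrightarrow> bounded_op (op_adj T)"
  using op_adj_prop by blast

lemma op_adj_ip: "bounded_op T \<Longrightarrow> f \<in> l2 \<Longrightarrow> g \<in> l2 \<Longrightarrow> ip (op_adj T f) g = ip f (T g)"
  using op_adj_prop by blast

lemma op_adj_ip2: "bounded_op T \<Longrightarrow> f \<in> l2 \<Longrightarrow> g \<in> l2 \<Longrightarrow> ip f (op_adj T g) = ip (T f) g"
proof -
  assume a: "bounded_op T" "f \<in> l2" "g \<in> l2"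
  have "ip f (op_adj T g) = cnj (ip (op_adj T g) f)" by (simp add: ip_cnj)
  also have "\<dots> = cnj (ip g (T f))" using op_adj_ip[OF a(1) a(3) a(2)] by simp
  finally show ?thesis by (simp add: ip_cnj)
qed

lemma op_adj_eqI:
  assumes "bounded_op T" "bounded_op S" "\<forall>f\<in>l2. \<forall>g\<in>l2. ip (S f) g = ip f (T g)"
  shows "op_adj T = S"
proof -
  have "bounded_op (op_adj T)" "\<forall>f\<in>l2. \<forall>g\<in>l2. ip (op_adj T f) g = ip f (T g)"
    using op_adj_prop[OF assms(1)] by blast+
  then show ?thesis using adj_unique[of "op_adj T" S T] assms(2,3) by blast
qed

lemma op_add_apply: "op_add T S f i = T f i + S f i" by (simp add: op_add_def)
lemma op_smult_apply: "op_smult c T f i = c * T f i" by (simp add: op_smult_def)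
lemma op_sum_apply: "op_sum F A f i = (\<Sum>a\<in>A. F a f i)" by (simp add: op_sum_def)
lemma op_zero_apply: "op_zero f i = 0" by (simp add: op_zero_def)
lemma op_id_l2[simp]: "f \<in> l2 \<Longrightarrow> op_id f = f" by (simp add: op_id_def)
lemma op_id_out: "f \<notin> l2 \<Longrightarrow> op_id f = (\<lambda>i. 0)" by (simp add: op_id_def)

lemma ip_scale_left: "ip (\<lambda>i. c * f i) g = cnj c * ip f g"
  unfolding ip_def by (simp add: infsum_cmult_right'[symmetric] mult.assoc)

lemma ip_scale_right: "ip f (\<lambda>i. c * g i) = c * ip f g"
  unfolding ip_def by (simp add: infsum_cmult_right'[symmetric] algebra_simps)

lemma ip_zero_right[simp]: "ip f (\<lambda>i. 0) = 0" unfolding ip_def by simp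
lemma ip_zero_left[simp]: "ip (\<lambda>i. 0) f = 0" unfolding ip_def by simp

lemma l2norm_zero_fun[simp]: "l2norm (\<lambda>i. 0) = 0" unfolding l2norm_def by simp

lemma bounded_op_id: "bounded_op op_id"
  unfolding bounded_op_def
  by (auto simp: l2_comb op_id_out intro!: exI[of _ 1])

lemma bounded_op_zero': "bounded_op (\<lambda>f i. 0)"
  unfolding bounded_op_def by (auto intro!: exI[of _ 0] simp: l2norm_nonneg)

lemma bounded_op_zero: "bounded_op op_zero"
  unfolding op_zero_def by (rule bounded_op_zero')

lemma bounded_op_comp:
  assumes S: "bounded_op S" and T: "bounded_op T"
  shows "bounded_op (S \<circ> T)"
proof -
  obtain K1 where K1: "K1 \<ge> 0" "\<forall>f\<in>l2. l2norm (S f) \<le> K1 * l2norm f" using bop_bound[OF S] by blast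
  obtain K2 where K2: "K2 \<ge> 0" "\<forall>f\<in>l2. l2norm (T f) \<le> K2 * l2norm f" using bop_bound[OF T] by blast
  have "l2norm (S (T f)) \<le> (K1 * K2) * l2norm f" if "f \<in> l2" for f
  proof -
    have "l2norm (S (T f)) \<le> K1 * l2norm (T f)" using K1 bop_l2[OF T] by blast
    also have "\<dots> \<le> K1 * (K2 * l2norm f)" using K2 that K1(1) by (simp add: mult_left_mono)
    finally show ?thesis by (simp add: mult.assoc)
  qed
  then show ?thesis
    unfolding bounded_op_def using S T
    by (auto simp: bop_l2 bop_lin bop_out bop_zero)
qed

lemma bounded_op_add:
  assumes S: "bounded_op S" and T: "bounded_op T"
  shows "bounded_op (op_add S T)"
proof -
  obtain K1 where K1: "K1 \<ge> 0" "\<forall>f\<in>l2. l2norm (S f) \<le> K1 * l2norm f" using bop_bound[OF S] by blast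
  obtain K2 where K2: "K2 \<ge> 0" "\<forall>f\<in>l2. l2norm (T f) \<le> K2 * l2norm f" using bop_bound[OF T] by blast
  have "l2norm (op_add S T f) \<le> (K1 + K2) * l2norm f" if "f \<in> l2" for f
  proof -
    have "l2norm (op_add S T f) = l2norm (\<lambda>i. S f i + T f i)" by (simp add: op_add_def)
    also have "\<dots> \<le> l2norm (S f) + l2norm (T f)" by (rule l2norm_triangle[OF bop_l2[OF S] bop_l2[OF T]])
    also have "\<dots> \<le> K1 * l2norm f + K2 * l2norm f" using K1 K2 that by (meson add_mono)
    finally show ?thesis by (simp add: algebra_simps)
  qed
  moreover have "op_add S T f \<in> l2" for f by (simp add: op_add_def l2_add bop_l2 S T)
  moreover have "op_add S T (\<lambda>i. f i + c * g i) = (\<lambda>i. op_add S T f i + c * op_add S T g i)"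
    if "f \<in> l2" "g \<in> l2" for f g c
    using that S T by (simp add: bop_lin algebra_simps op_add_def)
  moreover have "op_add S T f = (\<lambda>i. 0)" if "f \<notin> l2" for f
    using that S T by (simp add: bop_out op_add_def)
  ultimately show ?thesis unfolding bounded_op_def by blast
qed

lemma bounded_op_smult:
  assumes T: "bounded_op T"
  shows "bounded_op (op_smult c T)"
proof -
  obtain K where K: "K \<ge> 0" "\<forall>f\<in>l2. l2norm (T f) \<le> K * l2norm f" using bop_bound[OF T] by blast
  have "l2norm (op_smult c T f) \<le> (cmod c * K) * l2norm f" if "f \<in> l2" for f
  proof -
    have "l2norm (op_smult c T f) = cmod c * l2norm (T f)" by (simp add: op_smult_def l2norm_scale)
    also have "\<dots> \<le> cmod c * (K * l2norm f)" using K that by (simp add: mult_left_mono)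
    finally show ?thesis by (simp add: mult.assoc)
  qed
  moreover have "op_smult c T f \<in> l2" for f by (simp add: op_smult_def l2_scale bop_l2 T)
  moreover have "op_smult c T (\<lambda>i. f i + d * g i) = (\<lambda>i. op_smult c T f i + d * op_smult c T g i)"
    if "f \<in> l2" "g \<in> l2" for f g d
    using that T by (simp add: bop_lin algebra_simps op_smult_def)
  moreover have "op_smult c T f = (\<lambda>i. 0)" if "f \<notin> l2" for f
    using that T by (simp add: bop_out op_smult_def)
  ultimately show ?thesis unfolding bounded_op_def by blast
qed

lemma op_sum_empty[simp]: "op_sum F {} = op_zero"
  by (simp add: op_sum_def op_zero_def)

lemma op_sum_insert: "finite A \<Longrightarrow> a \<notin> A \<Longrightarrow> op_sum F (insert a A) = op_add (F a) (op_sum F A)"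
  by (simp add: op_sum_def op_add_def)

lemma bounded_op_sum:
  assumes "finite A" "\<And>a. a \<in> A \<Longrightarrow> bounded_op (F a)"
  shows "bounded_op (op_sum F A)"
  using assms
proof (induction A rule: finite_induct)
  case empty then show ?case by (simp add: bounded_op_zero bounded_op_zero')
next
  case (insert a A) then show ?case unfolding op_sum_insert[OF insert(1,2)] by (simp add: bounded_op_add)
qed

subsection \<open>Adjoint algebra\<close>

lemma op_adj_add:
  assumes S: "bounded_op S" and T: "bounded_op T"
  shows "op_adj (op_add S T) = op_add (op_adj S) (op_adj T)"
proof (rule op_adj_eqI)
  show "bounded_op (op_add S T)" by (rule bounded_op_add[OF S T])
  show "bounded_op (op_add (op_adj S) (op_adj T))" by (intro bounded_op_add op_adj_bounded S T)
  show "\<forall>f\<in>l2. \<forall>g\<in>l2. ip (op_add (op_adj S) (op_adj T) f) g = ip f (op_add S T g)"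
  proof (intro ballI)
    fix f g :: "'a \<Rightarrow> complex" assume f: "f \<in> l2" and g: "g \<in> l2"
    have "ip (op_add (op_adj S) (op_adj T) f) g = ip (op_adj S f) g + ip (op_adj T f) g"
      unfolding op_add_def by (rule ip_add_left) (auto intro: bop_l2 op_adj_bounded S T g)
    also have "\<dots> = ip f (S g) + ip f (T g)" using op_adj_ip S T f g by metis
    also have "\<dots> = ip f (op_add S T g)"
      unfolding op_add_def by (rule ip_add_right[symmetric]) (auto intro: bop_l2 S T f)
    finally show "ip (op_add (op_adj S) (op_adj T) f) g = ip f (op_add S T g)" .
  qed
qed

lemma op_adj_smult:
  assumes T: "bounded_op T"
  shows "op_adj (op_smult c T) = op_smult (cnj c) (op_adj T)"
proof (rule op_adj_eqI)
  show "bounded_op (op_smult c T)" by (rule bounded_op_smult[OF T])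
  show "bounded_op (op_smult (cnj c) (op_adj T))" by (intro bounded_op_smult op_adj_bounded T)
  show "\<forall>f\<in>l2. \<forall>g\<in>l2. ip (op_smult (cnj c) (op_adj T) f) g = ip f (op_smult c T g)"
    using T unfolding op_smult_def by (simp add: ip_scale_left ip_scale_right op_adj_ip)
qed

lemma op_adj_comp:
  assumes S: "bounded_op S" and T: "bounded_op T"
  shows "op_adj (S \<circ> T) = op_adj T \<circ> op_adj S"
proof (rule op_adj_eqI)
  show "bounded_op (S \<circ> T)" by (rule bounded_op_comp[OF S T])
  show "bounded_op (op_adj T \<circ> op_adj S)" by (intro bounded_op_comp op_adj_bounded S T)
  show "\<forall>f\<in>l2. \<forall>g\<in>l2. ip ((op_adj T \<circ> op_adj S) f) g = ip f ((S \<circ> T) g)"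
    using S T by (simp add: op_adj_ip bop_l2 op_adj_bounded)
qed

lemma op_adj_adj:
  assumes T: "bounded_op T"
  shows "op_adj (op_adj T) = T"
proof (rule op_adj_eqI)
  show "bounded_op (op_adj T)" by (rule op_adj_bounded[OF T])
  show "bounded_op T" by (rule T)
  show "\<forall>f\<in>l2. \<forall>g\<in>l2. ip (T f) g = ip f (op_adj T g)"
    using T by (simp add: op_adj_ip2)
qed

lemma op_adj_id: "op_adj op_id = op_id"
  by (rule op_adj_eqI) (auto simp: bounded_op_id)

lemma op_adj_zero': "op_adj (\<lambda>f i. 0) = (\<lambda>f i. 0)"
  by (rule op_adj_eqI) (auto simp: bounded_op_zero')

lemma op_adj_zero: "op_adj op_zero = op_zero"
  unfolding op_zero_def by (rule op_adj_zero')

lemma op_adj_sum: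
  assumes "finite A" "\<And>a. a \<in> A \<Longrightarrow> bounded_op (F a)"
  shows "op_adj (op_sum F A) = op_sum (\<lambda>a. op_adj (F a)) A"
  using assms
proof (induction A rule: finite_induct)
  case empty then show ?case by (simp add: op_adj_zero op_adj_zero')
next
  case (insert a A)
  then show ?case unfolding op_sum_insert[OF insert(1,2)] by (simp add: op_adj_add bounded_op_sum)
qed

lemma commutant_bounded: "S \<in> commutant N \<Longrightarrow> bounded_op S"
  unfolding commutant_def by blast

lemma commutant_subset: "commutant N \<subseteq> Collect bounded_op"
  using commutant_bounded by blast

lemma comm_add:
  assumes N: "N \<subseteq> Collect bounded_op" and S1: "S1 \<in> commutant N" and S2: "S2 \<in> commutant N"
  shows "op_add S1 S2 \<in> commutant N"
proof -
  have b1: "bounded_op S1" and b2: "bounded_op S2" using S1 S2 commutant_bounded by auto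
  have "op_add S1 S2 \<circ> T = T \<circ> op_add S1 S2" if T: "T \<in> N" for T
  proof -
    have bT: "bounded_op T" using T N by auto
    have c1: "S1 \<circ> T = T \<circ> S1" and c2: "S2 \<circ> T = T \<circ> S2" using S1 S2 T unfolding commutant_def by auto
    show ?thesis
    proof
      fix f
      have "(op_add S1 S2 \<circ> T) f = (\<lambda>i. S1 (T f) i + S2 (T f) i)" by (simp add: op_add_def)
      also have "\<dots> = (\<lambda>i. T (S1 f) i + T (S2 f) i)" using c1 c2 by (metis comp_apply)
      also have "\<dots> = T (\<lambda>i. S1 f i + S2 f i)" using bop_add[OF bT bop_l2[OF b1] bop_l2[OF b2]] by simp
      also have "\<dots> = (T \<circ> op_add S1 S2) f" by (simp add: op_add_def)
      finally show "(op_add S1 S2 \<circ> T) f = (T \<circ> op_add S1 S2) f" .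
    qed
  qed
  then show ?thesis using b1 b2 bounded_op_add unfolding commutant_def by blast
qed

lemma comm_smult:
  assumes N: "N \<subseteq> Collect bounded_op" and S1: "S1 \<in> commutant N"
  shows "op_smult c S1 \<in> commutant N"
proof -
  have b1: "bounded_op S1" using S1 commutant_bounded by auto
  have "op_smult c S1 \<circ> T = T \<circ> op_smult c S1" if T: "T \<in> N" for T
  proof -
    have bT: "bounded_op T" using T N by auto
    have c1: "S1 \<circ> T = T \<circ> S1" using S1 T unfolding commutant_def by auto
    show ?thesis
    proof
      fix f
      have "(op_smult c S1 \<circ> T) f = (\<lambda>i. c * S1 (T f) i)" by (simp add: op_smult_def)
      also have "\<dots> = (\<lambda>i. c * T (S1 f) i)" using c1 by (metis comp_apply)
      also have "\<dots> = T (\<lambda>i. c * S1 f i)" using bop_scale[OF bT bop_l2[OF b1]] by simp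
      also have "\<dots> = (T \<circ> op_smult c S1) f" by (simp add: op_smult_def)
      finally show "(op_smult c S1 \<circ> T) f = (T \<circ> op_smult c S1) f" .
    qed
  qed
  then show ?thesis using b1 bounded_op_smult unfolding commutant_def by blast
qed

lemma comm_comp:
  assumes S1: "S1 \<in> commutant N" and S2: "S2 \<in> commutant N"
  shows "S1 \<circ> S2 \<in> commutant N"
proof -
  have b1: "bounded_op S1" and b2: "bounded_op S2" using S1 S2 commutant_bounded by auto
  have "(S1 \<circ> S2) \<circ> T = T \<circ> (S1 \<circ> S2)" if T: "T \<in> N" for T
  proof -
    have c1: "S1 \<circ> T = T \<circ> S1" and c2: "S2 \<circ> T = T \<circ> S2" using S1 S2 T unfolding commutant_def by auto
    have "(S1 \<circ> S2) \<circ> T = S1 \<circ> (S2 \<circ> T)" by (simp add: comp_assoc)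
    also have "\<dots> = (S1 \<circ> T) \<circ> S2" using c2 by (simp add: comp_assoc)
    also have "\<dots> = T \<circ> (S1 \<circ> S2)" using c1 by (simp add: comp_assoc)
    finally show ?thesis .
  qed
  then show ?thesis using b1 b2 bounded_op_comp unfolding commutant_def by blast
qed

lemma comm_id:
  assumes N: "N \<subseteq> Collect bounded_op"
  shows "op_id \<in> commutant N"
proof -
  have "op_id \<circ> T = T \<circ> op_id" if T: "T \<in> N" for T
  proof
    fix f
    have bT: "bounded_op T" using T N by auto
    show "(op_id \<circ> T) f = (T \<circ> op_id) f"
      by (cases "f \<in> l2") (auto simp: bop_l2[OF bT] bop_out[OF bT] op_id_out bop_zero[OF bT])
  qed
  then show ?thesis using bounded_op_id unfolding commutant_def by blast
qed

context
  fixes M :: "'i op set"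
  assumes vN: "von_neumann_algebra M"
begin

lemma vN_eq: "M = commutant (commutant M)"
  using vN unfolding von_neumann_algebra_def by auto

lemma M_bounded: "T \<in> M \<Longrightarrow> bounded_op T"
  using vN unfolding von_neumann_algebra_def by auto

lemma M_adj: "T \<in> M \<Longrightarrow> op_adj T \<in> M"
  using vN unfolding von_neumann_algebra_def by auto

lemma M_add: "S \<in> M \<Longrightarrow> T \<in> M \<Longrightarrow> op_add S T \<in> M"
  using comm_add[OF commutant_subset] vN_eq by blast

lemma M_smult: "T \<in> M \<Longrightarrow> op_smult c T \<in> M"
  using comm_smult[OF commutant_subset] vN_eq by blast

lemma M_comp: "S \<in> M \<Longrightarrow> T \<in> M \<Longrightarrow> S \<circ> T \<in> M"
  using comm_comp vN_eq by blast

lemma M_id: "op_id \<in> M"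
  using comm_id[OF commutant_subset] vN_eq by blast

lemma M_zero: "(op_zero::'i op) \<in> M"
proof -
  have "op_smult 0 (op_id::'i op) = op_zero" by (simp add: op_smult_def op_zero_def fun_eq_iff)
  then show ?thesis using M_smult[OF M_id, of 0] by simp
qed

lemma M_sum: "finite A \<Longrightarrow> (\<And>a. a \<in> A \<Longrightarrow> F a \<in> M) \<Longrightarrow> op_sum F A \<in> M"
proof (induction A rule: finite_induct)
  case empty then show ?case using M_zero by simp
next
  case (insert a A) then show ?case unfolding op_sum_insert[OF insert(1,2)] by (simp add: M_add)
qed

context
  fixes \<tau> :: "'i op \<Rightarrow> complex"
  assumes tr: "tracial_state M \<tau>"
begin

lemma tau_lin: "T \<in> M \<Longrightarrow> S \<in> M \<Longrightarrow> \<tau> (op_add T (op_smult c S)) = \<tau> T + c * \<tau> S"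
  using tr unfolding tracial_state_def by blast

lemma tau_zero: "\<tau> (op_zero::'i op) = 0"
proof -
  have "op_add op_zero (op_smult 1 op_zero) = (op_zero :: 'i op)" by (simp add: op_add_def op_smult_def op_zero_def)
  then have "\<tau> op_zero = \<tau> op_zero + 1 * \<tau> op_zero" using tau_lin[OF M_zero M_zero, of 1] by simp
  then show ?thesis by simp
qed

lemma tau_add: "T \<in> M \<Longrightarrow> S \<in> M \<Longrightarrow> \<tau> (op_add T S) = \<tau> T + \<tau> S"
proof -
  assume a: "T \<in> M" "S \<in> M"
  have "op_smult 1 S = S" by (simp add: op_smult_def)
  then show ?thesis using tau_lin[OF a, of 1] by simp
qed

lemma tau_smult: "S \<in> M \<Longrightarrow> \<tau> (op_smult c S) = c * \<tau> S"
proof -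
  assume a: "S \<in> M"
  have "op_add op_zero (op_smult c S) = op_smult c S" by (simp add: op_add_def op_smult_def op_zero_def)
  then show ?thesis using tau_lin[OF M_zero a, of c] tau_zero by simp
qed

lemma tau_id: "\<tau> op_id = 1"
  using tr unfolding tracial_state_def by blast

lemma tau_sum: "finite A \<Longrightarrow> (\<And>a. a \<in> A \<Longrightarrow> F a \<in> M) \<Longrightarrow> \<tau> (op_sum F A) = (\<Sum>a\<in>A. \<tau> (F a))"
proof (induction A rule: finite_induct)
  case empty then show ?case using tau_zero by simp
next
  case (insert a A) then show ?case unfolding op_sum_insert[OF insert(1,2)] by (simp add: tau_add M_sum)
qed

lemma faithful_zero:
  assumes fa: "faithful_state M \<tau>" and z: "z \<in> M" and t0: "\<tau> (op_adj z \<circ> z) = 0"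
  shows "z = op_zero"
proof -
  have bz: "bounded_op z" using M_bounded z by blast
  have pos: "positive_op (op_adj z \<circ> z)"
    unfolding positive_op_def
  proof (intro conjI ballI)
    show "bounded_op (op_adj z \<circ> z)" by (intro bounded_op_comp op_adj_bounded bz)
    fix f :: "'i \<Rightarrow> complex" assume f: "f \<in> l2"
    have "ip f ((op_adj z \<circ> z) f) = ip (z f) (z f)" using op_adj_ip2[OF bz f bop_l2[OF bz]] by simp
    also have "\<dots> = complex_of_real ((l2norm (z f))^2)" by (rule ip_self[OF bop_l2[OF bz]])
    finally show "Im (ip f ((op_adj z \<circ> z) f)) = 0" "Re (ip f ((op_adj z \<circ> z) f)) \<ge> 0" by simp_all
  qed
  have inM: "op_adj z \<circ> z \<in> M" by (intro M_comp M_adj z)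
  have zz: "op_adj z \<circ> z = op_zero" using fa pos t0 inM unfolding faithful_state_def by blast
  show ?thesis
  proof (rule ext)
    fix f
    show "z f = op_zero f"
    proof (cases "f \<in> l2")
      case True
      have "ip (z f) (z f) = ip f ((op_adj z \<circ> z) f)" using op_adj_ip2[OF bz True bop_l2[OF bz]] by simp
      also have "\<dots> = 0" unfolding zz by (simp add: op_zero_def)
      finally have "z f = (\<lambda>i. 0)" using ip_self_zero bop_l2[OF bz] by blast
      then show ?thesis by (simp add: op_zero_def)
    next
      case False then show ?thesis using bop_out[OF bz] by (simp add: op_zero_def)
    qed
  qed
qed

end
end

lemma cadj_entry: "cadj A $ i $ j = cnj (A $ j $ i)"
  by (simp add: cadj_def)

lemma cadj_cadj: "cadj (cadj A) = A"
  by (simp add: cadj_def vec_eq_iff)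

lemma mult_entry: "(A ** B) $ i $ j = (\<Sum>k\<in>UNIV. A $ i $ k * B $ k $ j)"
  by (simp add: matrix_matrix_mult_def)

lemma mat1_entry: "(mat 1 :: complex^'n^'n) $ i $ j = (if i = j then 1 else 0)"
  by (simp add: mat_def)

lemma extract3:
  assumes "lin_indep3 A B C"
    and "\<And>j l. x * A $ j $ l + y * B $ j $ l + z * C $ j $ l = 0"
  shows "x = 0 \<and> y = 0 \<and> z = 0"
proof -
  have "(\<chi> i j. x * A $ i $ j + y * B $ i $ j + z * C $ i $ j) = 0"
    using assms(2) by (simp add: vec_eq_iff)
  then show ?thesis using assms(1) unfolding lin_indep3_def by blast
qed

lemma mat_lin3:
  fixes P A B C Q :: "complex^'n^'n"
  shows "P ** (\<chi> i j. x * A $ i $ j + y * B $ i $ j + z * C $ i $ j) ** Q =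
    (\<chi> i j. x * (P ** A ** Q) $ i $ j + y * (P ** B ** Q) $ i $ j + z * (P ** C ** Q) $ i $ j)"
  by (simp add: vec_eq_iff matrix_matrix_mult_def sum_distrib_left sum_distrib_right sum.distrib
                 algebra_simps)

lemma lin_indep_conj:
  fixes u1 u2 :: "complex^'n^'n"
  assumes u1: "cunitary u1" and u2: "cunitary u2"
    and li: "lin_indep3 (mat 1) (cadj u1 ** u2) (cadj u2 ** u1)"
  shows "lin_indep3 (mat 1) (u1 ** cadj u2) (u2 ** cadj u1)"
  unfolding lin_indep3_def
proof (intro allI impI)
  fix x y z :: complex
  assume h: "(\<chi> i j. x * mat 1 $ i $ j + y * (u1 ** cadj u2) $ i $ j + z * (u2 ** cadj u1) $ i $ j) = 0"
  have "cadj u1 ** (\<chi> i j. x * mat 1 $ i $ j + y * (u1 ** cadj u2) $ i $ j + z * (u2 ** cadj u1) $ i $ j) ** u1 = 0"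
    unfolding h by (simp add: vec_eq_iff matrix_matrix_mult_def)
  moreover have "cadj u1 ** mat 1 ** u1 = mat 1" using u1 unfolding cunitary_def by (simp add: matrix_mul_rid)
  moreover have "cadj u1 ** (u1 ** cadj u2) ** u1 = cadj u2 ** u1"
    using u1 unfolding cunitary_def by (metis matrix_mul_assoc matrix_mul_lid)
  moreover have "cadj u1 ** (u2 ** cadj u1) ** u1 = cadj u1 ** u2"
    using u1 unfolding cunitary_def by (metis matrix_mul_assoc matrix_mul_rid)
  ultimately have "(\<chi> i j. x * mat 1 $ i $ j + z * (cadj u1 ** u2) $ i $ j + y * (cadj u2 ** u1) $ i $ j) = 0"
    unfolding mat_lin3 by (simp add: vec_eq_iff algebra_simps)
  then have "x = 0 \<and> z = 0 \<and> y = 0" using li unfolding lin_indep3_def by blast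
  then show "x = 0 \<and> y = 0 \<and> z = 0" by blast
qed

lemma exists_minor:
  fixes u1 u2 :: "complex^'n^'n"
  assumes u1: "cunitary u1" and u2: "cunitary u2"
    and li: "lin_indep3 (mat 1) (cadj u1 ** u2) (cadj u2 ** u1)"
  shows "\<exists>k j k' j'. cadj u1 $ k $ j * cadj u2 $ k' $ j' - cadj u1 $ k' $ j' * cadj u2 $ k $ j \<noteq> 0"
proof (rule ccontr)
  assume "\<not> ?thesis"
  then have H: "cadj u1 $ k $ j * cadj u2 $ k' $ j' = cadj u1 $ k' $ j' * cadj u2 $ k $ j" for k j k' j'
    by auto
  obtain k0 j0 where nz: "cadj u1 $ k0 $ j0 \<noteq> 0"
  proof (rule ccontr)
    assume "\<not> thesis"
    then have z: "cadj u1 $ k $ j = 0" for k j using that by blast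
    obtain j :: 'n where True by blast
    have "(cadj u1 ** u1) $ j $ j = 0" unfolding mult_entry using z by simp
    moreover have "(cadj u1 ** u1) $ j $ j = 1" using u1 unfolding cunitary_def by (simp add: mat1_entry)
    ultimately show False by simp
  qed
  define lam where "lam = cadj u2 $ k0 $ j0 / cadj u1 $ k0 $ j0"
  have bl: "cadj u2 $ k $ j = lam * cadj u1 $ k $ j" for k j
    using H[of k0 j0 k j] nz unfolding lam_def by (simp add: field_simps)
  have u2e: "u2 $ k $ l = cnj lam * u1 $ k $ l" for k l
    using bl[of l k] unfolding cadj_entry by (metis complex_cnj_cnj complex_cnj_mult)
  have "(cadj u1 ** u2) $ j $ l = cnj lam * (cadj u1 ** u1) $ j $ l" for j l
    unfolding mult_entry u2e by (simp add: sum_distrib_left algebra_simps)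
  then have "(cadj u1 ** u2) $ j $ l = cnj lam * mat 1 $ j $ l" for j l
    using u1 unfolding cunitary_def by simp
  then have "cnj lam * mat 1 $ j $ l + (-1) * (cadj u1 ** u2) $ j $ l + 0 * (cadj u2 ** u1) $ j $ l = 0" for j l
    by simp
  then have "(-1::complex) = 0" using extract3[OF li] by blast
  then show False by simp
qed

lemma l2_sum: "finite A \<Longrightarrow> (\<And>a. a \<in> A \<Longrightarrow> g a \<in> l2) \<Longrightarrow> (\<lambda>i. \<Sum>a\<in>A. c a * g a i) \<in> l2"
proof (induction A rule: finite_induct)
  case empty then show ?case by simp
next
  case (insert a A)
  have "(\<lambda>i. c a * g a i + 1 * (\<Sum>a\<in>A. c a * g a i)) \<in> l2"
    using insert by (intro l2_comb l2_scale) auto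
  then show ?case using insert by simp
qed

lemma bop_sum:
  assumes T: "bounded_op T"
  shows "finite A \<Longrightarrow> (\<And>a. a \<in> A \<Longrightarrow> g a \<in> l2) \<Longrightarrow> T (\<lambda>i. \<Sum>a\<in>A. c a * g a i) = (\<lambda>i. \<Sum>a\<in>A. c a * T (g a) i)"
proof (induction A rule: finite_induct)
  case empty then show ?case using bop_zero[OF T] by simp
next
  case (insert a A)
  have l: "(\<lambda>i. \<Sum>a\<in>A. c a * g a i) \<in> l2" using insert by (intro l2_sum) auto
  have "T (\<lambda>i. c a * g a i + 1 * (\<Sum>a\<in>A. c a * g a i)) = (\<lambda>i. c a * T (g a) i + 1 * T (\<lambda>i. \<Sum>a\<in>A. c a * g a i) i)"
    by (rule bop_lin2[OF T]) (use insert l in auto)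
  then show ?case using insert by simp
qed

lemma comp_two:
  assumes X1: "bounded_op X1" and X2: "bounded_op X2" and Y1: "bounded_op Y1" and Y2: "bounded_op Y2"
  shows "((op_add (op_smult p X1) (op_smult q X2)) \<circ> (op_add (op_smult p' Y1) (op_smult q' Y2))) f i
    = p * p' * X1 (Y1 f) i + p * q' * X1 (Y2 f) i + q * p' * X2 (Y1 f) i + q * q' * X2 (Y2 f) i"
proof -
  have e1: "X1 (\<lambda>i. p' * Y1 f i + q' * Y2 f i) = (\<lambda>i. p' * X1 (Y1 f) i + q' * X1 (Y2 f) i)"
    by (rule bop_lin2[OF X1 bop_l2[OF Y1] bop_l2[OF Y2]])
  have e2: "X2 (\<lambda>i. p' * Y1 f i + q' * Y2 f i) = (\<lambda>i. p' * X2 (Y1 f) i + q' * X2 (Y2 f) i)"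
    by (rule bop_lin2[OF X2 bop_l2[OF Y1] bop_l2[OF Y2]])
  show ?thesis
    unfolding comp_def op_add_def op_smult_def e1 e2 by (simp add: algebra_simps)
qed

lemma adj_two:
  assumes W1: "bounded_op W1" and W2: "bounded_op W2"
  shows "op_adj (op_add (op_smult a W1) (op_smult b W2)) = op_add (op_smult (cnj a) (op_adj W1)) (op_smult (cnj b) (op_adj W2))"
  using W1 W2 by (simp add: op_adj_add bounded_op_smult op_adj_smult)

context
  fixes W1 W2 :: "'i op" and A B :: "complex^'n^'n" and U :: "'n \<Rightarrow> 'n \<Rightarrow> 'i op"
  assumes W1: "bounded_op W1" and W2: "bounded_op W2"
    and U: "\<And>k j. U k j = op_add (op_smult (A $ k $ j) W1) (op_smult (B $ k $ j) W2)"
begin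

lemma U_bounded: "bounded_op (U k j)"
  unfolding U by (intro bounded_op_add bounded_op_smult W1 W2)

lemma U_adjU_point:
  "(op_adj (U k j) \<circ> U m l) f i = cnj (A $ k $ j) * A $ m $ l * op_adj W1 (W1 f) i
     + cnj (A $ k $ j) * B $ m $ l * op_adj W1 (W2 f) i
     + cnj (B $ k $ j) * A $ m $ l * op_adj W2 (W1 f) i
     + cnj (B $ k $ j) * B $ m $ l * op_adj W2 (W2 f) i"
  unfolding U adj_two[OF W1 W2]
  by (rule comp_two) (intro op_adj_bounded W1 W2)+

lemma U_Uadj_point:
  "(U j k \<circ> op_adj (U l k)) f i = A $ j $ k * cnj (A $ l $ k) * W1 (op_adj W1 f) i
     + A $ j $ k * cnj (B $ l $ k) * W1 (op_adj W2 f) i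
     + B $ j $ k * cnj (A $ l $ k) * W2 (op_adj W1 f) i
     + B $ j $ k * cnj (B $ l $ k) * W2 (op_adj W2 f) i"
  unfolding U adj_two[OF W1 W2]
  by (rule comp_two) (intro op_adj_bounded W1 W2)+

lemma UstarU_sum:
  "op_sum (\<lambda>k. op_adj (U k j) \<circ> U k l) UNIV f i =
     (cadj A ** A) $ j $ l * op_adj W1 (W1 f) i + (cadj A ** B) $ j $ l * op_adj W1 (W2 f) i
   + (cadj B ** A) $ j $ l * op_adj W2 (W1 f) i + (cadj B ** B) $ j $ l * op_adj W2 (W2 f) i"
  unfolding op_sum_apply U_adjU_point mult_entry cadj_entry
  by (simp add: sum.distrib sum_distrib_right)

lemma UUstar_sum:
  "op_sum (\<lambda>k. U j k \<circ> op_adj (U l k)) UNIV f i =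
     (A ** cadj A) $ j $ l * W1 (op_adj W1 f) i + (A ** cadj B) $ j $ l * W1 (op_adj W2 f) i
   + (B ** cadj A) $ j $ l * W2 (op_adj W1 f) i + (B ** cadj B) $ j $ l * W2 (op_adj W2 f) i"
  unfolding op_sum_apply U_Uadj_point mult_entry cadj_entry
  by (simp add: sum.distrib sum_distrib_right)

end

lemma pair_sum: "(\<Sum>r\<in>(UNIV::('a::finite \<times> 'b::finite) set). g (fst r) (snd r)) = (\<Sum>k\<in>UNIV. \<Sum>m\<in>UNIV. g k m)"
  by (subst sum.cartesian_product) (simp add: case_prod_beta UNIV_Times_UNIV)

lemma conj_mat_entry: "(u ** x ** cadj v) $ j $ l = (\<Sum>k\<in>UNIV. \<Sum>m\<in>UNIV. x $ k $ m * (u $ j $ k * cnj (v $ l $ m)))"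
  unfolding mult_entry cadj_entry sum_distrib_right
  by (subst sum.swap) (simp add: mult_ac)

lemma easy_dir:
  fixes u1 u2 :: "complex^'n^'n" and t :: real and M :: "'i op set" and \<tau> :: "'i op \<Rightarrow> complex"
  assumes u1: "cunitary u1" and u2: "cunitary u2"
    and vN: "von_neumann_algebra M" and tr: "tracial_state M \<tau>"
    and pM: "p \<in> M" and pp: "p \<circ> p = p" and pa: "op_adj p = p" and tp: "\<tau> p = complex_of_real t"
  shows "factorizable_with_ancilla
           (\<lambda>x. t *\<^sub>R (u1 ** x ** cadj u1) + (1 - t) *\<^sub>R (u2 ** x ** cadj u2)) M \<tau>"
proof -
  have bp: "bounded_op p" using M_bounded[OF vN pM] .
  define W2 where "W2 = op_add op_id (op_smult (-1) p)"
  have W2M: "W2 \<in> M" unfolding W2_def by (intro M_add[OF vN] M_smult[OF vN] M_id[OF vN] pM)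
  have bW2: "bounded_op W2" using M_bounded[OF vN W2M] .
  have aW2: "op_adj W2 = W2"
    unfolding W2_def by (simp add: op_adj_add bounded_op_id bounded_op_smult bp op_adj_smult op_adj_id pa)
  have tW2: "\<tau> W2 = 1 - complex_of_real t"
    unfolding W2_def using tau_lin[OF vN tr M_id[OF vN] pM, of "-1"] tau_id[OF vN tr] tp by simp
  have pid: "p (op_id f) = p f" for f
    by (cases "f \<in> l2") (simp_all add: op_id_out bop_out[OF bp] bop_zero[OF bp])
  have ppf: "p (p f) = p f" for f using pp by (metis comp_apply)
  have W2f: "W2 f i = op_id f i - p f i" for f i unfolding W2_def by (simp add: op_add_def op_smult_def)
  have pW2: "p (W2 f) i = 0" for f i
  proof -
    have e: "p (\<lambda>i. 1 * op_id f i + (-1) * p f i) = (\<lambda>i. 1 * p (op_id f) i + (-1) * p (p f) i)"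
      by (rule bop_lin2[OF bp bop_l2[OF bounded_op_id] bop_l2[OF bp]])
    have "W2 f = (\<lambda>i. 1 * op_id f i + (-1) * p f i)" unfolding W2_def op_add_def op_smult_def by simp
    then have "p (W2 f) i = 1 * p (op_id f) i + (-1) * p (p f) i" using e by simp
    then show ?thesis by (simp add: pid ppf)
  qed
  have W2p: "W2 (p f) i = 0" for f i unfolding W2f using bop_l2[OF bp] by (simp add: ppf)
  have W2W2: "W2 (W2 f) i = W2 f i" for f i using W2f[of "W2 f" i] pW2[of f i] bop_l2[OF bW2] by simp
  define U where "U k j = op_add (op_smult (cadj u1 $ k $ j) p) (op_smult (cadj u2 $ k $ j) W2)" for k j
  note UsU = UstarU_sum[OF bp bW2 U_def]
  note UUs = UUstar_sum[OF bp bW2 U_def]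
  note Upt = U_adjU_point[OF bp bW2 U_def, unfolded comp_apply]
  have m1: "cadj (cadj u1) ** cadj u1 = mat 1" "cadj (cadj u2) ** cadj u2 = mat 1"
           "cadj u1 ** cadj (cadj u1) = mat 1" "cadj u2 ** cadj (cadj u2) = mat 1"
    using u1 u2 unfolding cunitary_def cadj_cadj by auto
  have c1: "\<forall>j l. op_sum (\<lambda>k. op_adj (U k j) \<circ> U k l) UNIV = (if j = l then op_id else op_zero)"
  proof (intro allI ext)
    fix j l f i
    show "op_sum (\<lambda>k. op_adj (U k j) \<circ> U k l) UNIV f i = (if j = l then op_id else op_zero) f i"
      unfolding UsU m1 pa aW2 using W2f[of f i]
      by (simp add: mat1_entry ppf pW2 W2p W2W2 op_zero_def)
  qed
  have c2: "\<forall>j l. op_sum (\<lambda>k. U j k \<circ> op_adj (U l k)) UNIV = (if j = l then op_id else op_zero)"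
  proof (intro allI ext)
    fix j l f i
    show "op_sum (\<lambda>k. U j k \<circ> op_adj (U l k)) UNIV f i = (if j = l then op_id else op_zero) f i"
      unfolding UUs m1 pa aW2 using W2f[of f i]
      by (simp add: mat1_entry ppf pW2 W2p W2W2 op_zero_def)
  qed
  have c3: "\<forall>x j l. (t *\<^sub>R (u1 ** x ** cadj u1) + (1 - t) *\<^sub>R (u2 ** x ** cadj u2)) $ j $ l =
           \<tau> (op_sum (\<lambda>(k, m). op_smult (x $ k $ m) (op_adj (U k j) \<circ> U m l)) UNIV)"
  proof (intro allI)
    fix x :: "complex^'n^'n" and j l
    define C1 where "C1 = (\<Sum>k\<in>UNIV. \<Sum>m\<in>UNIV. x $ k $ m * (u1 $ j $ k * cnj (u1 $ l $ m)))"
    define C2 where "C2 = (\<Sum>k\<in>UNIV. \<Sum>m\<in>UNIV. x $ k $ m * (u2 $ j $ k * cnj (u2 $ l $ m)))"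
    have e1: "op_sum (\<lambda>(k, m). op_smult (x $ k $ m) (op_adj (U k j) \<circ> U m l)) UNIV
        = op_add (op_smult C1 p) (op_smult C2 W2)"
    proof (intro ext)
      fix f i
      have "op_sum (\<lambda>(k, m). op_smult (x $ k $ m) (op_adj (U k j) \<circ> U m l)) UNIV f i
          = (\<Sum>r\<in>UNIV. x $ fst r $ snd r * ((u1 $ j $ fst r * cnj (u1 $ l $ snd r)) * p f i
                + (u2 $ j $ fst r * cnj (u2 $ l $ snd r)) * W2 f i))"
        unfolding op_sum_apply
        by (intro sum.cong refl) (simp add: case_prod_beta op_smult_def Upt pa aW2 ppf pW2 W2p W2W2 cadj_entry)
      also have "\<dots> = C1 * p f i + C2 * W2 f i"
        unfolding C1_def C2_def pair_sum[of "\<lambda>k m. x $ k $ m * ((u1 $ j $ k * cnj (u1 $ l $ m)) * p f i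
                + (u2 $ j $ k * cnj (u2 $ l $ m)) * W2 f i)"]
        by (simp add: sum.distrib sum_distrib_left algebra_simps)
      finally show "op_sum (\<lambda>(k, m). op_smult (x $ k $ m) (op_adj (U k j) \<circ> U m l)) UNIV f i
          = op_add (op_smult C1 p) (op_smult C2 W2) f i" by (simp add: op_add_def op_smult_def)
    qed
    have e2: "\<tau> (op_add (op_smult C1 p) (op_smult C2 W2)) = C1 * t + C2 * (1 - t)"
      using tau_add[OF vN tr M_smult[OF vN pM] M_smult[OF vN W2M]] tau_smult[OF vN tr pM]
            tau_smult[OF vN tr W2M] tp tW2 by simp
    have e3: "(t *\<^sub>R (u1 ** x ** cadj u1) + (1 - t) *\<^sub>R (u2 ** x ** cadj u2)) $ j $ l = t * C1 + (1 - t) * C2"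
      unfolding C1_def C2_def conj_mat_entry[symmetric] vector_add_component vector_scaleR_component by (simp add: scaleR_conv_of_real)
    show "(t *\<^sub>R (u1 ** x ** cadj u1) + (1 - t) *\<^sub>R (u2 ** x ** cadj u2)) $ j $ l =
           \<tau> (op_sum (\<lambda>(k, m). op_smult (x $ k $ m) (op_adj (U k j) \<circ> U m l)) UNIV)"
      unfolding e3 e1 e2 by (simp add: algebra_simps)
  qed
  have c0: "\<forall>j k. U j k \<in> M" unfolding U_def by (intro allI M_add[OF vN] M_smult[OF vN] pM W2M)
  show ?thesis unfolding factorizable_with_ancilla_def using c0 c1 c2 c3 by blast
qed

context
  fixes M :: "'i op set" and \<tau> :: "'i op \<Rightarrow> complex" and V :: "'r::finite \<Rightarrow> 'i op"
  assumes vN: "von_neumann_algebra M" and tr: "tracial_state M \<tau>" and VM: "\<And>r. V r \<in> M"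
begin

lemma bV: "bounded_op (V r)" using M_bounded[OF vN VM] .

lemma Lc_M: "op_sum (\<lambda>r. op_smult (c r) (V r)) UNIV \<in> M"
  by (intro M_sum[OF vN] M_smult[OF vN] VM) auto

lemma Lc_apply: "op_sum (\<lambda>r. op_smult (c r) (V r)) UNIV f = (\<lambda>i. \<Sum>r\<in>UNIV. c r * V r f i)"
  by (simp add: op_sum_def op_smult_def)

lemma Lc_adj: "op_adj (op_sum (\<lambda>r. op_smult (c r) (V r)) UNIV) = op_sum (\<lambda>r. op_smult (cnj (c r)) (op_adj (V r))) UNIV"
proof -
  have "op_adj (op_sum (\<lambda>r. op_smult (c r) (V r)) UNIV) = op_sum (\<lambda>r. op_adj (op_smult (c r) (V r))) UNIV"
    by (rule op_adj_sum) (auto intro: bounded_op_smult bV)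
  also have "\<dots> = op_sum (\<lambda>r. op_smult (cnj (c r)) (op_adj (V r))) UNIV"
    by (simp add: op_adj_smult bV)
  finally show ?thesis .
qed

lemma Lc_gram:
  "\<tau> (op_adj (op_sum (\<lambda>r. op_smult (c r) (V r)) UNIV) \<circ> op_sum (\<lambda>r. op_smult (c r) (V r)) UNIV)
   = (\<Sum>r\<in>UNIV. \<Sum>s\<in>UNIV. cnj (c r) * c s * \<tau> (op_adj (V r) \<circ> V s))"
proof -
  have eq: "op_adj (op_sum (\<lambda>r. op_smult (c r) (V r)) UNIV) \<circ> op_sum (\<lambda>r. op_smult (c r) (V r)) UNIV
    = op_sum (\<lambda>r. op_sum (\<lambda>s. op_smult (cnj (c r) * c s) (op_adj (V r) \<circ> V s)) UNIV) UNIV"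
  proof (intro ext)
    fix f i
    have "(op_adj (op_sum (\<lambda>r. op_smult (c r) (V r)) UNIV) \<circ> op_sum (\<lambda>r. op_smult (c r) (V r)) UNIV) f i
      = (\<Sum>r\<in>UNIV. cnj (c r) * op_adj (V r) (\<lambda>i. \<Sum>s\<in>UNIV. c s * V s f i) i)"
      unfolding Lc_adj comp_apply Lc_apply by (simp add: op_sum_def op_smult_def)
    also have "\<dots> = (\<Sum>r\<in>UNIV. cnj (c r) * (\<Sum>s\<in>UNIV. c s * op_adj (V r) (V s f) i))"
      by (subst bop_sum[OF op_adj_bounded[OF bV]]) (auto intro: bop_l2 bV)
    also have "\<dots> = op_sum (\<lambda>r. op_sum (\<lambda>s. op_smult (cnj (c r) * c s) (op_adj (V r) \<circ> V s)) UNIV) UNIV f i"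
      by (simp add: op_sum_def op_smult_def sum_distrib_left mult.assoc)
    finally show "(op_adj (op_sum (\<lambda>r. op_smult (c r) (V r)) UNIV) \<circ> op_sum (\<lambda>r. op_smult (c r) (V r)) UNIV) f i
      = op_sum (\<lambda>r. op_sum (\<lambda>s. op_smult (cnj (c r) * c s) (op_adj (V r) \<circ> V s)) UNIV) UNIV f i" .
  qed
  have mem: "op_smult a (op_adj (V r) \<circ> V s) \<in> M" for a r s
    by (intro M_smult[OF vN] M_comp[OF vN] M_adj[OF vN] VM)
  have mem2: "op_sum (\<lambda>s. op_smult (cnj (c r) * c s) (op_adj (V r) \<circ> V s)) UNIV \<in> M" for r
    by (intro M_sum[OF vN] mem) auto
  show ?thesis unfolding eq
    by (simp add: tau_sum[OF vN tr] mem mem2 tau_smult[OF vN tr] M_comp[OF vN] M_adj[OF vN] VM)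
qed

end

lemma sum_two:
  fixes a b :: complex and g :: "'r::finite \<Rightarrow> complex"
  assumes "p \<noteq> q"
  shows "(\<Sum>r\<in>(UNIV::'r::finite set). (if r = p then a else if r = q then b else 0) * g r) = a * g p + b * g q"
proof -
  have "(\<Sum>r\<in>(UNIV::'r set). (if r = p then a else if r = q then b else 0) * g r)
      = (\<Sum>r\<in>(UNIV::'r set). (if r = p then a * g p else 0) + (if r = q then b * g q else 0))"
    by (intro sum.cong refl) (use assms in auto)
  also have "\<dots> = a * g p + b * g q" by (simp add: sum.distrib)
  finally show ?thesis .
qed

lemma delta_sum2:
  fixes g :: "'a::finite \<Rightarrow> 'b::finite \<Rightarrow> complex"
  shows "(\<Sum>k'\<in>UNIV. \<Sum>m'\<in>UNIV. (if k' = k \<and> m' = m then 1 else 0) * g k' m') = (g k m :: complex)"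
proof -
  have e: "(if k' = k \<and> m' = m then 1 else 0) * g k' m' = (if m' = m then (if k' = k then g k m else 0) else 0)" for k' m'
    by auto
  show ?thesis unfolding e by simp
qed

lemma gram_alg:
  fixes c a b :: "'r::finite \<Rightarrow> complex"
  shows "(\<Sum>r\<in>UNIV. \<Sum>s\<in>UNIV. cnj (c r) * c s * (T * (cnj (a r) * a s) + T' * (cnj (b r) * b s)))
    = T * (cnj (\<Sum>r\<in>UNIV. c r * a r) * (\<Sum>s\<in>UNIV. c s * a s)) + T' * (cnj (\<Sum>r\<in>UNIV. c r * b r) * (\<Sum>s\<in>UNIV. c s * b s))"
  by (simp add: sum_product sum_distrib_left sum.distrib algebra_simps)

lemma hard_dir:
  fixes u1 u2 :: "complex^'n^'n" and t :: real and M :: "'i op set" and \<tau> :: "'i op \<Rightarrow> complex"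
  assumes u1: "cunitary u1" and u2: "cunitary u2"
    and li: "lin_indep3 (mat 1) (cadj u1 ** u2) (cadj u2 ** u1)"
    and vN: "von_neumann_algebra M" and tr: "tracial_state M \<tau>" and fa: "faithful_state M \<tau>"
    and fac: "factorizable_with_ancilla
           (\<lambda>x. t *\<^sub>R (u1 ** x ** cadj u1) + (1 - t) *\<^sub>R (u2 ** x ** cadj u2)) M \<tau>"
  shows "\<exists>p\<in>M. p \<circ> p = p \<and> op_adj p = p \<and> \<tau> p = complex_of_real t"
proof -
  obtain U :: "'n \<Rightarrow> 'n \<Rightarrow> 'i op" where H0: "\<forall>j k. U j k \<in> M"
    and H1: "\<forall>j l. op_sum (\<lambda>k. op_adj (U k j) \<circ> U k l) UNIV = (if j = l then op_id else op_zero)"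
    and H2: "\<forall>j l. op_sum (\<lambda>k. U j k \<circ> op_adj (U l k)) UNIV = (if j = l then op_id else op_zero)"
    and H3: "\<forall>x j l. (t *\<^sub>R (u1 ** x ** cadj u1) + (1 - t) *\<^sub>R (u2 ** x ** cadj u2)) $ j $ l =
           \<tau> (op_sum (\<lambda>(k, m). op_smult (x $ k $ m) (op_adj (U k j) \<circ> U m l)) UNIV)"
    using fac unfolding factorizable_with_ancilla_def by blast
  define V where "V r = U (fst r) (snd r)" for r :: "'n \<times> 'n"
  have VM: "V r \<in> M" for r unfolding V_def using H0 by blast
  define \<alpha> where "\<alpha> r = cadj u1 $ fst r $ snd r" for r :: "'n \<times> 'n"
  define \<beta> where "\<beta> r = cadj u2 $ fst r $ snd r" for r :: "'n \<times> 'n"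
  have G: "\<tau> (op_adj (V r) \<circ> V s) = t * (cnj (\<alpha> r) * \<alpha> s) + (1 - t) * (cnj (\<beta> r) * \<beta> s)" for r s
  proof -
    obtain k j where r: "r = (k, j)" by (cases r)
    obtain m l where s: "s = (m, l)" by (cases s)
    define E :: "complex^'n^'n" where "E = (\<chi> k' m'. if k' = k \<and> m' = m then 1 else 0)"
    have eqs: "op_sum (\<lambda>(k', m'). op_smult (E $ k' $ m') (op_adj (U k' j) \<circ> U m' l)) UNIV = op_adj (U k j) \<circ> U m l"
    proof (intro ext)
      fix f i
      have ee: "(\<lambda>r. (case r of (k', m') \<Rightarrow> op_smult (E $ k' $ m') (op_adj (U k' j) \<circ> U m' l)) f i)
          = (\<lambda>r. if r = (k, m) then (op_adj (U k j) \<circ> U m l) f i else 0)"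
        by (auto simp: fun_eq_iff E_def op_smult_def split: prod.split)
      then show "op_sum (\<lambda>(k', m'). op_smult (E $ k' $ m') (op_adj (U k' j) \<circ> U m' l)) UNIV f i
          = (op_adj (U k j) \<circ> U m l) f i"
        unfolding op_sum_apply ee by simp
    qed
    have m1: "(u ** E ** cadj u) $ j $ l = u $ j $ k * cnj (u $ l $ m)" for u :: "complex^'n^'n"
      unfolding conj_mat_entry E_def vec_lambda_beta by (rule delta_sum2)
    have sc: "(t *\<^sub>R X + (1 - t) *\<^sub>R Y) $ j $ l = t * X $ j $ l + (1 - t) * Y $ j $ l" for X Y :: "complex^'n^'n"
      unfolding vector_add_component vector_scaleR_component by (simp add: scaleR_conv_of_real)
    have "\<tau> (op_adj (U k j) \<circ> U m l) = (t *\<^sub>R (u1 ** E ** cadj u1) + (1 - t) *\<^sub>R (u2 ** E ** cadj u2)) $ j $ l"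
      using H3[rule_format, of E j l] unfolding eqs by simp
    also have "\<dots> = t * (u1 $ j $ k * cnj (u1 $ l $ m)) + (1 - t) * (u2 $ j $ k * cnj (u2 $ l $ m))"
      unfolding sc m1 ..
    finally have "\<tau> (op_adj (U k j) \<circ> U m l) = t * (u1 $ j $ k * cnj (u1 $ l $ m)) + (1 - t) * (u2 $ j $ k * cnj (u2 $ l $ m))" .
    then show ?thesis unfolding r s V_def \<alpha>_def \<beta>_def by (simp add: cadj_entry)
  qed
  have gram: "\<tau> (op_adj (op_sum (\<lambda>r. op_smult (c r) (V r)) UNIV) \<circ> op_sum (\<lambda>r. op_smult (c r) (V r)) UNIV)
     = t * (cnj (\<Sum>r\<in>UNIV. c r * \<alpha> r) * (\<Sum>s\<in>UNIV. c s * \<alpha> s)) + (1 - t) * (cnj (\<Sum>r\<in>UNIV. c r * \<beta> r) * (\<Sum>s\<in>UNIV. c s * \<beta> s))" for c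
    unfolding Lc_gram[OF vN tr VM] G by (rule gram_alg)
  obtain k0 j0 k1 j1 where Dnz: "cadj u1 $ k0 $ j0 * cadj u2 $ k1 $ j1 - cadj u1 $ k1 $ j1 * cadj u2 $ k0 $ j0 \<noteq> 0"
    using exists_minor[OF u1 u2 li] by blast
  define p where "p = (k0, j0)"
  define q where "q = (k1, j1)"
  define D where "D = \<alpha> p * \<beta> q - \<alpha> q * \<beta> p"
  have D0: "D \<noteq> 0" using Dnz unfolding D_def p_def q_def \<alpha>_def \<beta>_def by simp
  have pq: "p \<noteq> q" using D0 unfolding D_def by auto
  define c1 where "c1 r = (if r = p then \<beta> q / D else if r = q then - \<beta> p / D else 0)" for r
  define c2 where "c2 r = (if r = p then - \<alpha> q / D else if r = q then \<alpha> p / D else 0)" for r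
  have s1a: "(\<Sum>r\<in>UNIV. c1 r * \<alpha> r) = 1"
  proof -
    have "(\<Sum>r\<in>UNIV. c1 r * \<alpha> r) = (\<alpha> p * \<beta> q - \<alpha> q * \<beta> p) / D"
      unfolding c1_def sum_two[OF pq] using D0 by (simp add: field_simps)
    then show ?thesis using D0 unfolding D_def by simp
  qed
  have s1b: "(\<Sum>r\<in>UNIV. c1 r * \<beta> r) = 0"
    unfolding c1_def sum_two[OF pq] using D0 by (simp add: field_simps)
  have s2a: "(\<Sum>r\<in>UNIV. c2 r * \<alpha> r) = 0"
    unfolding c2_def sum_two[OF pq] using D0 by (simp add: field_simps)
  have s2b: "(\<Sum>r\<in>UNIV. c2 r * \<beta> r) = 1"
  proof -
    have "(\<Sum>r\<in>UNIV. c2 r * \<beta> r) = (\<alpha> p * \<beta> q - \<alpha> q * \<beta> p) / D"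
      unfolding c2_def sum_two[OF pq] using D0 by (simp add: field_simps)
    then show ?thesis using D0 unfolding D_def by simp
  qed
  define w1 where "w1 = op_sum (\<lambda>r. op_smult (c1 r) (V r)) UNIV"
  define w2 where "w2 = op_sum (\<lambda>r. op_smult (c2 r) (V r)) UNIV"
  have w1M: "w1 \<in> M" unfolding w1_def by (rule Lc_M[OF vN tr VM])
  have w2M: "w2 \<in> M" unfolding w2_def by (rule Lc_M[OF vN tr VM])
  have bw1: "bounded_op w1" using M_bounded[OF vN w1M] .
  have bw2: "bounded_op w2" using M_bounded[OF vN w2M] .
  have lin3: "(\<Sum>r\<in>UNIV. ((if r = r0 then 1 else 0) - a * c1 r - b * c2 r) * g r)
      = g r0 - a * (\<Sum>r\<in>UNIV. c1 r * g r) - b * (\<Sum>r\<in>UNIV. c2 r * g r)" for r0 a b and g :: "'n \<times> 'n \<Rightarrow> complex"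
  proof -
    have "(\<lambda>r. ((if r = r0 then 1 else 0) - a * c1 r - b * c2 r) * g r)
        = (\<lambda>r. (if r = r0 then g r else 0) - a * (c1 r * g r) - b * (c2 r * g r))"
      by (auto simp: fun_eq_iff algebra_simps)
    then show ?thesis by (simp only: sum_subtractf sum_distrib_left sum.delta finite UNIV_I if_True)
  qed
  have dec: "U k j = op_add (op_smult (cadj u1 $ k $ j) w1) (op_smult (cadj u2 $ k $ j) w2)" for k j
  proof -
    define r0 where "r0 = (k, j)"
    define cz where "cz r = (if r = r0 then 1 else 0) - \<alpha> r0 * c1 r - \<beta> r0 * c2 r" for r
    have za: "(\<Sum>r\<in>UNIV. cz r * \<alpha> r) = 0" unfolding cz_def lin3 s1a s2a by simp
    have zb: "(\<Sum>r\<in>UNIV. cz r * \<beta> r) = 0" unfolding cz_def lin3 s1b s2b by simp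
    have "\<tau> (op_adj (op_sum (\<lambda>r. op_smult (cz r) (V r)) UNIV) \<circ> op_sum (\<lambda>r. op_smult (cz r) (V r)) UNIV) = 0"
      unfolding gram za zb by simp
    then have Lz: "op_sum (\<lambda>r. op_smult (cz r) (V r)) UNIV = op_zero"
      by (rule faithful_zero[OF vN tr fa Lc_M[OF vN tr VM]])
    show ?thesis
    proof (intro ext)
      fix f i
      have "0 = op_sum (\<lambda>r. op_smult (cz r) (V r)) UNIV f i" unfolding Lz by (simp add: op_zero_def)
      also have "\<dots> = (\<Sum>r\<in>UNIV. cz r * V r f i)" by (simp add: op_sum_def op_smult_def)
      also have "\<dots> = V r0 f i - \<alpha> r0 * w1 f i - \<beta> r0 * w2 f i"
        unfolding cz_def lin3 w1_def w2_def by (simp add: op_sum_def op_smult_def)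
      finally show "U k j f i = op_add (op_smult (cadj u1 $ k $ j) w1) (op_smult (cadj u2 $ k $ j) w2) f i"
        unfolding r0_def V_def \<alpha>_def \<beta>_def by (simp add: op_add_def op_smult_def algebra_simps)
    qed
  qed
  note UsU = UstarU_sum[OF bw1 bw2 dec]
  note UUs = UUstar_sum[OF bw1 bw2 dec]
  have mm: "cadj (cadj u1) ** cadj u1 = mat 1" "cadj (cadj u2) ** cadj u2 = mat 1"
           "cadj u1 ** cadj (cadj u1) = mat 1" "cadj u2 ** cadj (cadj u2) = mat 1"
           "cadj (cadj u1) ** cadj u2 = u1 ** cadj u2" "cadj (cadj u2) ** cadj u1 = u2 ** cadj u1"
           "cadj u1 ** cadj (cadj u2) = cadj u1 ** u2" "cadj u2 ** cadj (cadj u1) = cadj u2 ** u1"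
    using u1 u2 unfolding cunitary_def cadj_cadj by auto
  have ifid: "(if j = l then op_id else op_zero) f i = mat 1 $ j $ l * op_id f i" for j l and f :: "'i \<Rightarrow> complex" and i
    by (simp add: mat1_entry op_zero_def)
  have idf: "op_adj w1 (w1 f) i + op_adj w2 (w2 f) i = op_id f i" for f i
  proof -
    have "(op_adj w1 (w1 f) i + op_adj w2 (w2 f) i - op_id f i) * mat 1 $ j $ l
        + op_adj w1 (w2 f) i * (u1 ** cadj u2) $ j $ l + op_adj w2 (w1 f) i * (u2 ** cadj u1) $ j $ l = 0" for j l
      using H1[rule_format, of j l, THEN fun_cong[where x=f], THEN fun_cong[where x=i]]
      unfolding UsU mm ifid by (simp add: algebra_simps)
    then have "op_adj w1 (w1 f) i + op_adj w2 (w2 f) i - op_id f i = 0"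
      using extract3[OF lin_indep_conj[OF u1 u2 li]] by (metis mult.commute)
    then show ?thesis by simp
  qed
  have w12: "w1 (op_adj w2 f) i = 0" for f i
  proof -
    have "(w1 (op_adj w1 f) i + w2 (op_adj w2 f) i - op_id f i) * mat 1 $ j $ l
        + w1 (op_adj w2 f) i * (cadj u1 ** u2) $ j $ l + w2 (op_adj w1 f) i * (cadj u2 ** u1) $ j $ l = 0" for j l
      using H2[rule_format, of j l, THEN fun_cong[where x=f], THEN fun_cong[where x=i]]
      unfolding UUs mm ifid by (simp add: algebra_simps)
    then show ?thesis using extract3[OF li] by (metis mult.commute)
  qed
  define P where "P = op_adj w1 \<circ> w1"
  have w1P: "w1 (P f) = w1 f" for f
  proof -
    have "op_id f = (\<lambda>i. op_adj w1 (w1 f) i + op_adj w2 (w2 f) i)" using idf by (simp add: fun_eq_iff)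
    then have "w1 (op_id f) = (\<lambda>i. w1 (op_adj w1 (w1 f)) i + w1 (op_adj w2 (w2 f)) i)"
      using bop_add[OF bw1 bop_l2[OF op_adj_bounded[OF bw1]] bop_l2[OF op_adj_bounded[OF bw2]]] by simp
    also have "\<dots> = w1 (P f)" unfolding P_def by (simp add: w12)
    finally have "w1 (P f) = w1 (op_id f)" by simp
    also have "\<dots> = w1 f"
      by (cases "f \<in> l2") (simp_all add: op_id_out bop_out[OF bw1] bop_zero[OF bw1])
    finally show ?thesis .
  qed
  have PP: "P \<circ> P = P"
  proof
    fix f show "(P \<circ> P) f = P f" unfolding comp_apply using w1P[of f] unfolding P_def by simp
  qed
  have aP: "op_adj P = P"
    unfolding P_def by (simp add: op_adj_comp op_adj_bounded bw1 op_adj_adj)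
  have tP: "\<tau> P = complex_of_real t"
    using gram[of c1] unfolding P_def w1_def[symmetric] s1a s1b by simp
  have PM: "P \<in> M" unfolding P_def by (intro M_comp[OF vN] M_adj[OF vN] w1M)
  show ?thesis using PM PP aP tP by blast
qed

theorem mainTheorem4:
  fixes u1 u2 :: "complex^'n^'n" and t :: real
    and M :: "'i op set" and \<tau> :: "'i op \<Rightarrow> complex"
  assumes "CARD('n) \<ge> 3"
    and "cunitary u1" and "cunitary u2"
    and "lin_indep3 (mat 1) (cadj u1 ** u2) (cadj u2 ** u1)"
    and "0 < t" and "t < 1"
    and "von_neumann_algebra M"
    and "normal_faithful_tracial_state M \<tau>"
  shows "factorizable_with_ancilla
           (\<lambda>x. t *\<^sub>R (u1 ** x ** cadj u1) + (1 - t) *\<^sub>R (u2 ** x ** cadj u2)) M \<tau>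
         \<longleftrightarrow> (\<exists>p\<in>M. p \<circ> p = p \<and> op_adj p = p \<and> \<tau> p = complex_of_real t)"
proof
  have tr: "tracial_state M \<tau>" and fa: "faithful_state M \<tau>"
    using assms(8) unfolding normal_faithful_tracial_state_def by blast+
  assume "factorizable_with_ancilla
           (\<lambda>x. t *\<^sub>R (u1 ** x ** cadj u1) + (1 - t) *\<^sub>R (u2 ** x ** cadj u2)) M \<tau>"
  then show "\<exists>p\<in>M. p \<circ> p = p \<and> op_adj p = p \<and> \<tau> p = complex_of_real t"
    by (rule hard_dir[OF assms(2,3,4,7) tr fa])
next
  have tr: "tracial_state M \<tau>"
    using assms(8) unfolding normal_faithful_tracial_state_def by blast
  assume "\<exists>p\<in>M. p \<circ> p = p \<and> op_adj p = p \<and> \<tau> p = complex_of_real t"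
  then obtain p where "p \<in> M" "p \<circ> p = p" "op_adj p = p" "\<tau> p = complex_of_real t" by blast
  then show "factorizable_with_ancilla
           (\<lambda>x. t *\<^sub>R (u1 ** x ** cadj u1) + (1 - t) *\<^sub>R (u2 ** x ** cadj u2)) M \<tau>"
    by (rule easy_dir[OF assms(2,3,7) tr])
qed

end
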